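(* Let $S,I:\mathbb{R}\to\mathbb{R}$ be $2\pi$-periodic Lipschitz functions and suppose there are $\alpha_0\in(0,\pi)$, $p,q\ge1$, $c_1,c_2>0$, $c_3\in(0,1]$ with $S(\theta)\le-c_1(\pi-\theta)^p$ for $\theta\in[\alpha_0,\pi]$, $S(\theta)\ge c_1(\theta+\pi)^p$ for $\theta\in[-\pi,-\alpha_0]$, $0\le I(\theta)\le c_2(\pi-|\theta|)^q$ for $\theta\in[-\pi,\pi]$, and $\min_{|\phi|\le\max\{|\theta|,\alpha_0\}}I(\phi)\ge c_3I(\theta)$ for $\theta\in[-\pi,\pi]$. Let $\omega_1,\dots,\omega_N\in\mathbb{R}$, $\|\Omega\|_\infty=\max_i|\omega_i|$, and for initial data $(\theta_i^0)$ let $(\theta_i(t))$ solve $\dot\theta_i=\omega_i+\frac{\kappa}{N}\sum_{j=1}^NI(\theta_j)S(\theta_i)$, $\theta_i(0)=\theta_i^0$, with $R(t)=\frac1N\sum_jI(\theta_j(t))$. Let $\mu$ be a probability measure on $[-\pi,\pi]$ with $R^*:=\int_{-\pi}^\pi I\,d\mu>0$, and assume \[ \kappa>\max\left\{\frac{4(4c_2)^{p/q}}{c_1c_3}\cdot\frac{\|\Omega\|_\infty}{(R^* )^{1+p/q}},\ \frac{4}{c_1c_3(\pi-\alpha_0)^p}\cdot\frac{\|\Omega\|_\infty}{R^*}\right\}. \] Then, with $\mu^{\otimes N}$ the product measure on $[-\pi,\pi]^N$, \[ \mu^{\otimes N}\Big\{(\theta_i^0)\in[-\pi,\pi]^N: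 R(t)>\tfrac{c_3R^*}{4}\ \forall t\ge0,\ \sup_{t\ge0}\theta_i(t)-\inf_{t\ge0}\theta_i(t)<2\pi\ \forall i\Big\}\ge1-\exp\left(-\frac{(R^* )^2N}{2\|I\|_{\sup}^2}\right). \]
   Context: $\|I\|_{\sup}=\sup_\theta|I(\theta)|$. *)

theory Defs
  imports "HOL-Probability.Probability"
begin

definition is_solution ::
  "(real \<Rightarrow> real) \<Rightarrow> (real \<Rightarrow> real) \<Rightarrow> nat \<Rightarrow> (nat \<Rightarrow> real) \<Rightarrow> real
     \<Rightarrow> (nat \<Rightarrow> real) \<Rightarrow> (real \<Rightarrow> nat \<Rightarrow> real) \<Rightarrow> bool" where
  "is_solution S I N \<omega> \<kappa> x0 \<theta> \<longleftrightarrow>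
     (\<forall>i<N. \<theta> 0 i = x0 i) \<and>
     (\<forall>i<N. \<forall>t\<ge>0. ((\<lambda>s. \<theta> s i) has_real_derivative
         (\<omega> i + \<kappa> / real N * (\<Sum>j<N. I (\<theta> t j)) * S (\<theta> t i))) (at t within {0..}))"

definition order_param :: "(real \<Rightarrow> real) \<Rightarrow> nat \<Rightarrow> (nat \<Rightarrow> real) \<Rightarrow> real" where
  "order_param I N th = (\<Sum>j<N. I (th j)) / real N"

definition sup_norm :: "(real \<Rightarrow> real) \<Rightarrow> real" where
  "sup_norm I = (SUP \<theta>. \<bar>I \<theta>\<bar>)"

end

theory Submission
  imports Defs
begin

lemma barrier_up:
  fixes f :: "real \<Rightarrow> real"
  assumes cont: "continuous_on {a..t} f" and a: "0 \<le> a" "a \<le> t" and fa: "f a \<le> b"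
    and der: "\<And>s. a \<le> s \<Longrightarrow> s < t \<Longrightarrow> f s = b \<Longrightarrow>
        \<exists>v<0. (f has_real_derivative v) (at s within {0..})"
  shows "f t \<le> b"
proof (rule ccontr)
  assume "\<not> f t \<le> b"
  hence ft: "f t > b" by simp
  define K where "K = {s \<in> {a..t}. f s = b}"
  obtain s0 where s0: "a \<le> s0" "s0 \<le> t" "f s0 = b"
    using IVT'[of f a b t] fa ft a cont by auto
  have Kne: "K \<noteq> {}" using s0 by (auto simp: K_def)
  have Kcl: "closed K" unfolding K_def
    by (rule continuous_closed_preimage_constant[OF cont]) simp
  have Kbdd: "bdd_above K" unfolding K_def by (rule bdd_aboveI[of _ t]) auto
  define s where "s = Sup K"
  have sK: "s \<in> K" unfolding s_def using closed_contains_Sup[OF Kne Kbdd Kcl] .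
  hence s: "a \<le> s" "s \<le> t" "f s = b" by (auto simp: K_def)
  have "s \<noteq> t" using s ft by auto
  with s have st: "s < t" by simp
  have above: "f y > b" if y: "s < y" "y \<le> t" for y
  proof (rule ccontr)
    assume "\<not> f y > b"
    hence "f y \<le> b" by simp
    moreover have "continuous_on {y..t} f"
      by (rule continuous_on_subset[OF cont]) (use y s in auto)
    ultimately obtain z where z: "y \<le> z" "z \<le> t" "f z = b"
      using IVT'[of f y b t] ft y by auto
    hence "z \<in> K" using y s by (auto simp: K_def)
    hence "z \<le> s" unfolding s_def using Kbdd by (rule cSup_upper)
    thus False using z y by simp
  qed
  obtain v where v: "v < 0" "(f has_real_derivative v) (at s within {0..})"
    using der[OF s(1) st s(3)] by blast
  have "((\<lambda>y. (f y - f s) / (y - s)) \<longlongrightarrow> v) (at s within {0..})"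
    using v(2) by (simp add: has_field_derivative_iff)
  hence ev: "eventually (\<lambda>y. (f y - f s) / (y - s) < 0) (at s within {0..})"
    using v(1) by (rule order_tendstoD(2))
  have "at_right s \<le> at s within {0..}"
    by (rule at_le) (use s a in auto)
  hence "eventually (\<lambda>y. (f y - f s) / (y - s) < 0) (at_right s)"
    using ev by (rule filter_leD)
  then obtain b' where b': "b' > s" "\<And>y. y > s \<Longrightarrow> y < b' \<Longrightarrow> (f y - f s) / (y - s) < 0"
    unfolding eventually_at_right_field by blast
  define y where "y = (s + min b' t) / 2"
  have y: "s < y" "y < b'" "y \<le> t" using b'(1) st by (auto simp: y_def)
  have "(f y - f s) / (y - s) < 0" using b'(2) y by simp
  moreover have "f y > f s" using above[OF y(1) y(3)] s by simp
  ultimately show False using y(1) by (simp add: divide_less_0_iff)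
qed

lemma barrier_down:
  fixes f :: "real \<Rightarrow> real"
  assumes cont: "continuous_on {a..t} f" and a: "0 \<le> a" "a \<le> t" and fa: "f a \<ge> b"
    and der: "\<And>s. a \<le> s \<Longrightarrow> s < t \<Longrightarrow> f s = b \<Longrightarrow>
        \<exists>v>0. (f has_real_derivative v) (at s within {0..})"
  shows "f t \<ge> b"
proof -
  have "(\<lambda>x. - f x) t \<le> - b"
  proof (rule barrier_up[where a=a and f="\<lambda>x. - f x"])
    show "continuous_on {a..t} (\<lambda>x. - f x)" using cont by (intro continuous_intros)
  next
    fix s assume "a \<le> s" "s < t" "- f s = - b"
    then obtain v where "v > 0" "(f has_real_derivative v) (at s within {0..})"
      using der by force
    thus "\<exists>v<0. ((\<lambda>x. - f x) has_real_derivative v) (at s within {0..})"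
      by (intro exI[of _ "-v"]) (auto intro!: derivative_eq_intros)
  qed (use a fa in auto)
  thus ?thesis by simp
qed

lemma periodic_int:
  fixes f :: "real \<Rightarrow> real"
  assumes per: "\<forall>x. f (x + 2 * pi) = f x"
  shows "f (x + 2 * pi * of_int k) = f x"
proof -
  have nat: "f (y + 2 * pi * real n) = f y" for y n
  proof (induction n)
    case (Suc n)
    have "f (y + 2 * pi * real (Suc n)) = f ((y + 2 * pi * real n) + 2 * pi)"
      by (simp add: algebra_simps)
    also have "\<dots> = f (y + 2 * pi * real n)" using per by blast
    finally show ?case using Suc by simp
  qed simp
  show ?thesis
  proof (cases "k \<ge> 0")
    case True
    hence "k = int (nat k)" by simp
    hence "f (x + 2 * pi * of_int k) = f (x + 2 * pi * real (nat k))"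
      by (metis of_int_of_nat_eq)
    thus ?thesis using nat by simp
  next
    case False
    define n where "n = nat (- k)"
    have n: "of_int k = - real n" using False by (simp add: n_def)
    have "f (x + 2 * pi * of_int k) = f (x + 2 * pi * of_int k + 2 * pi * real n)" using nat by simp
    also have "\<dots> = f x" using n by simp
    finally show ?thesis .
  qed
qed

lemma periodic_reduce:
  fixes x :: real
  obtains y k where "y \<in> {-pi..pi}" "x = y + 2 * pi * of_int k"
proof -
  define k where "k = \<lfloor>(x + pi) / (2 * pi)\<rfloor>"
  define y where "y = x - 2 * pi * of_int k"
  have pi2: "2 * pi > 0" by simp
  have a: "of_int k \<le> (x + pi) / (2 * pi)" "(x + pi) / (2 * pi) < of_int k + 1"
    unfolding k_def by (rule of_int_floor_le, rule real_of_int_floor_add_one_gt)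
  have b1: "of_int k * (2 * pi) \<le> x + pi" using a(1) pi2 by (simp only: pos_le_divide_eq)
  have b2: "x + pi < (of_int k + 1) * (2 * pi)" using a(2) pi2 by (simp only: pos_divide_less_eq)
  have "y \<in> {-pi..pi}" unfolding y_def atLeastAtMost_iff using b1 b2 by (simp add: algebra_simps)
  moreover have "x = y + 2 * pi * of_int k" unfolding y_def by simp
  ultimately show ?thesis by (rule that)
qed

lemma periodic_eq_reduced:
  fixes f :: "real \<Rightarrow> real"
  assumes per: "\<forall>x. f (x + 2 * pi) = f x"
  obtains y where "y \<in> {-pi..pi}" "f x = f y"
proof -
  obtain y k where "y \<in> {-pi..pi}" "x = y + 2 * pi * of_int k" by (rule periodic_reduce)
  thus ?thesis using that periodic_int[OF per, of y k] by auto
qed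

lemma deriv_cont_on:
  assumes "\<And>t. t \<ge> 0 \<Longrightarrow> (f has_real_derivative f' t) (at t within {0..})"
  shows "continuous_on {0..} f"
  unfolding continuous_on_eq_continuous_within
  using assms by (auto intro: DERIV_continuous)

locale kura_det =
  fixes S I :: "real \<Rightarrow> real" and \<alpha>0 p q c1 c2 c3 \<kappa> R :: real
    and N :: nat and \<omega> :: "nat \<Rightarrow> real"
  assumes S_per: "\<forall>x. S (x + 2 * pi) = S x"
    and I_per: "\<forall>x. I (x + 2 * pi) = I x"
    and contS: "continuous_on UNIV S"
    and contI: "continuous_on UNIV I"
    and \<alpha>0: "0 < \<alpha>0" "\<alpha>0 < pi"
    and pq: "p \<ge> 1" "q \<ge> 1"
    and cs: "c1 > 0" "c2 > 0" "0 < c3" "c3 \<le> 1"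
    and S_right: "\<forall>\<theta>\<in>{\<alpha>0..pi}. S \<theta> \<le> - c1 * (pi - \<theta>) powr p"
    and S_left: "\<forall>\<theta>\<in>{-pi..-\<alpha>0}. S \<theta> \<ge> c1 * (\<theta> + pi) powr p"
    and I_bounds: "\<forall>\<theta>\<in>{-pi..pi}. 0 \<le> I \<theta> \<and> I \<theta> \<le> c2 * (pi - \<bar>\<theta>\<bar>) powr q"
    and I_min: "\<forall>\<theta>\<in>{-pi..pi}. \<forall>\<phi>. \<bar>\<phi>\<bar> \<le> max \<bar>\<theta>\<bar> \<alpha>0 \<longrightarrow> I \<phi> \<ge> c3 * I \<theta>"
    and N: "N \<ge> 1"
    and Rpos: "R > 0"
    and \<kappa>_big: "\<kappa> > max
        (4 * (4 * c2) powr (p / q) / (c1 * c3) * (Max ((\<lambda>i. \<bar>\<omega> i\<bar>) ` {..<N}))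
           / R powr (1 + p / q))
        (4 / (c1 * c3 * (pi - \<alpha>0) powr p) * (Max ((\<lambda>i. \<bar>\<omega> i\<bar>) ` {..<N}))
           / R)"

context kura_det
begin

lemma Omega_ge: "i < N \<Longrightarrow> \<omega> i \<le> Max ((\<lambda>i. \<bar>\<omega> i\<bar>) ` {..<N})"
  by (rule order_trans[OF abs_ge_self], rule Max_ge) auto

lemma Omega_nonneg: "Max ((\<lambda>i. \<bar>\<omega> i\<bar>) ` {..<N}) \<ge> 0"
  using N by (intro order_trans[OF abs_ge_zero Max_ge[of _ "\<bar>\<omega> 0\<bar>"]]) auto

lemma kappa_pos: "\<kappa> > 0"
proof -
  have "0 \<le> 4 / (c1 * c3 * (pi - \<alpha>0) powr p) * (Max ((\<lambda>i. \<bar>\<omega> i\<bar>) ` {..<N})) / R"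
    using Omega_nonneg cs \<alpha>0 Rpos by (intro divide_nonneg_pos mult_nonneg_nonneg) auto
  thus ?thesis using \<kappa>_big by linarith
qed

lemma I_nonneg: "I x \<ge> 0"
proof -
  obtain y where "y \<in> {-pi..pi}" "I x = I y" using periodic_eq_reduced[OF I_per] by blast
  thus ?thesis using I_bounds by auto
qed

lemma delta_exists:
  obtains \<delta> where "\<delta> > 0" "\<delta> < pi - \<alpha>0" "c2 * \<delta> powr q \<le> R / 4"
    "\<kappa> * c1 * c3 * R * \<delta> powr p > 4 * Max ((\<lambda>i. \<bar>\<omega> i\<bar>) ` {..<N})"
proof -
  define \<Omega> where "\<Omega> = Max ((\<lambda>i. \<bar>\<omega> i\<bar>) ` {..<N})"
  have \<Omega>: "\<Omega> \<ge> 0" using Omega_nonneg by (simp add: \<Omega>_def)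
  have \<kappa>: "\<kappa> > 0" by (rule kappa_pos)
  have p0: "p > 0" "q > 0" using pq by auto
  define K where "K = \<kappa> * c1 * c3 * R"
  have K: "K > 0" using \<kappa> cs Rpos by (simp add: K_def)
  define m where "m = 4 * \<Omega> / K"
  have m: "m \<ge> 0" using \<Omega> K by (simp add: m_def)
  define u1 where "u1 = (pi - \<alpha>0) powr p"
  define u2 where "u2 = (R / (4 * c2)) powr (p / q)"
  have u1: "u1 > 0" using \<alpha>0 by (simp add: u1_def)
  have u2: "u2 > 0" using Rpos cs by (simp add: u2_def)
  have "\<kappa> > 4 / (c1 * c3 * u1) * \<Omega> / R" using \<kappa>_big by (simp add: u1_def \<Omega>_def)
  hence "\<kappa> * (c1 * c3 * u1 * R) > 4 * \<Omega>"
    using cs u1 Rpos by (simp add: field_simps)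
  hence mu1: "m < u1" using K u1 by (simp add: m_def K_def field_simps)
  have "R powr (1 + p / q) = R * R powr (p / q)" using Rpos by (simp add: powr_add)
  moreover have "u2 = R powr (p / q) / (4 * c2) powr (p / q)"
    using Rpos cs by (simp add: u2_def powr_divide)
  ultimately have "4 * (4 * c2) powr (p / q) / (c1 * c3) * \<Omega> / R powr (1 + p / q)
      = 4 * \<Omega> / (c1 * c3 * R * u2)"
    using Rpos cs u2 by (simp add: field_simps)
  hence "\<kappa> > 4 * \<Omega> / (c1 * c3 * R * u2)" using \<kappa>_big by (simp add: \<Omega>_def)
  hence "\<kappa> * (c1 * c3 * R * u2) > 4 * \<Omega>"
    using cs u2 Rpos by (simp add: field_simps)
  hence mu2: "m < u2" using K u2 by (simp add: m_def K_def field_simps)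
  define dp where "dp = (m + min u1 u2) / 2"
  have dp: "dp > 0" "m < dp" "dp < u1" "dp < u2"
    using m mu1 mu2 u1 u2 by (auto simp: dp_def)
  define \<delta> where "\<delta> = dp powr (1 / p)"
  have \<delta>0: "\<delta> > 0" using dp by (simp add: \<delta>_def)
  have \<delta>p: "\<delta> powr p = dp" using dp p0 by (simp add: \<delta>_def powr_powr)
  have "\<delta> < u1 powr (1 / p)" unfolding \<delta>_def using dp p0 by (intro powr_less_mono2) auto
  also have "u1 powr (1 / p) = pi - \<alpha>0" using \<alpha>0 p0 by (simp add: u1_def powr_powr)
  finally have \<delta>1: "\<delta> < pi - \<alpha>0" .
  have "\<delta> powr q = dp powr (q / p)" using dp p0 by (simp add: \<delta>_def powr_powr)
  also have "\<dots> < u2 powr (q / p)" using dp p0 by (intro powr_less_mono2) auto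
  also have "u2 powr (q / p) = R / (4 * c2)" using Rpos cs p0 by (simp add: u2_def powr_powr)
  finally have "\<delta> powr q < R / (4 * c2)" .
  hence \<delta>2: "c2 * \<delta> powr q \<le> R / 4" using cs by (simp add: field_simps)
  have "K * dp > K * m" using K dp by simp
  also have "K * m = 4 * \<Omega>" using K by (simp add: m_def)
  finally have \<delta>3: "\<kappa> * c1 * c3 * R * \<delta> powr p > 4 * \<Omega>" by (simp add: \<delta>p K_def)
  show ?thesis using that[OF \<delta>0 \<delta>1 \<delta>2] \<delta>3 by (simp add: \<Omega>_def)
qed

end

context kura_det
begin

lemma det_good:
  assumes x0: "\<forall>i<N. x0 i \<in> {-pi..pi}"
    and sol: "is_solution S I N \<omega> \<kappa> x0 \<theta>"
    and R0: "order_param I N x0 > R / 2"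
  shows "(\<forall>t\<ge>0. order_param I N (\<theta> t) > c3 * R / 4) \<and>
         (\<forall>i<N. bdd_above ((\<lambda>t. \<theta> t i) ` {0..}) \<and> bdd_below ((\<lambda>t. \<theta> t i) ` {0..}) \<and>
              (SUP t\<in>{0..}. \<theta> t i) - (INF t\<in>{0..}. \<theta> t i) < 2 * pi)"
proof -
  define c where "c = c3 * R / 4"
  define \<Omega> where "\<Omega> = Max ((\<lambda>i. \<bar>\<omega> i\<bar>) ` {..<N})"
  define Rt where "Rt = (\<lambda>s. order_param I N (\<theta> s))"
  obtain \<delta> where \<delta>: "\<delta> > 0" "\<delta> < pi - \<alpha>0" "c2 * \<delta> powr q \<le> R / 4"
    "\<kappa> * c1 * c3 * R * \<delta> powr p > 4 * \<Omega>"
    using delta_exists unfolding \<Omega>_def by blast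
  have \<kappa>: "\<kappa> > 0" by (rule kappa_pos)
  have Npos: "real N > 0" using N by simp
  have \<theta>0: "\<And>i. i < N \<Longrightarrow> \<theta> 0 i = x0 i" using sol by (simp add: is_solution_def)
  have der: "((\<lambda>s. \<theta> s i) has_real_derivative (\<omega> i + \<kappa> * Rt s * S (\<theta> s i))) (at s within {0..})"
    if "i < N" "s \<ge> 0" for i s
  proof -
    have d: "((\<lambda>s. \<theta> s i) has_real_derivative (\<omega> i + \<kappa> / real N * (\<Sum>j<N. I (\<theta> s j)) * S (\<theta> s i))) (at s within {0..})"
      using sol that unfolding is_solution_def by blast
    have e: "\<omega> i + \<kappa> / real N * (\<Sum>j<N. I (\<theta> s j)) * S (\<theta> s i) = \<omega> i + \<kappa> * Rt s * S (\<theta> s i)"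
      by (simp add: Rt_def order_param_def)
    show ?thesis using d by (simp only: e)
  qed
  have cont: "continuous_on {0..} (\<lambda>s. \<theta> s i)" if "i < N" for i
    by (rule deriv_cont_on[OF der[OF that]])
  have contR: "continuous_on {0..} Rt"
    unfolding Rt_def order_param_def
    by (intro continuous_intros continuous_on_compose2[OF contI cont]) (use N in auto)
  have drift_neg: "\<exists>v<0. ((\<lambda>s. \<theta> s i) has_real_derivative v) (at s within {0..})"
    if i: "i < N" and s: "s \<ge> 0" and Rs: "Rt s > c"
      and y: "\<theta> s i - 2 * pi * of_int k \<in> {\<alpha>0..pi - \<delta>}" for i s k
  proof -
    define y where "y = \<theta> s i - 2 * pi * of_int k"
    have Sy: "S (\<theta> s i) = S y"
      using periodic_int[OF S_per, of y k] by (simp add: y_def)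
    have "y \<in> {\<alpha>0..pi}" using y \<delta> by (auto simp: y_def)
    hence "S y \<le> - c1 * (pi - y) powr p" using S_right by blast
    moreover have "\<delta> powr p \<le> (pi - y) powr p"
      using y \<delta> pq by (intro powr_mono2) (auto simp: y_def)
    hence "c1 * \<delta> powr p \<le> c1 * (pi - y) powr p" using cs by (intro mult_left_mono) auto
    ultimately have Sle: "S (\<theta> s i) \<le> - (c1 * \<delta> powr p)"
      using Sy by linarith
    have cpos: "c > 0" using cs Rpos by (simp add: c_def)
    have Rspos: "Rt s > 0" using cpos Rs by linarith
    have A: "\<kappa> * Rt s * S (\<theta> s i) \<le> \<kappa> * Rt s * (- (c1 * \<delta> powr p))"
      using Sle \<kappa> Rspos by (intro mult_left_mono) auto
    have B: "(\<kappa> * c1 * \<delta> powr p) * Rt s > (\<kappa> * c1 * \<delta> powr p) * c"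
      using Rs \<kappa> cs \<delta> by (intro mult_strict_left_mono) auto
    have C: "(\<kappa> * c1 * \<delta> powr p) * c > \<Omega>"
      using \<delta>(4) by (simp add: c_def field_simps)
    have "\<omega> i \<le> \<Omega>" unfolding \<Omega>_def by (rule Omega_ge[OF i])
    hence "\<omega> i + \<kappa> * Rt s * S (\<theta> s i) < 0"
      using A B C by (simp add: algebra_simps)
    thus ?thesis using der[OF i s] by blast
  qed
  have drift_pos: "\<exists>v>0. ((\<lambda>s. \<theta> s i) has_real_derivative v) (at s within {0..})"
    if i: "i < N" and s: "s \<ge> 0" and Rs: "Rt s > c"
      and y: "\<theta> s i - 2 * pi * of_int k \<in> {-pi + \<delta>..-\<alpha>0}" for i s k
  proof -
    define y where "y = \<theta> s i - 2 * pi * of_int k"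
    have Sy: "S (\<theta> s i) = S y"
      using periodic_int[OF S_per, of y k] by (simp add: y_def)
    have "y \<in> {-pi..-\<alpha>0}" using y \<delta> by (auto simp: y_def)
    hence "S y \<ge> c1 * (y + pi) powr p" using S_left by blast
    moreover have "\<delta> powr p \<le> (y + pi) powr p"
      using y \<delta> pq by (intro powr_mono2) (auto simp: y_def)
    hence "c1 * \<delta> powr p \<le> c1 * (y + pi) powr p" using cs by (intro mult_left_mono) auto
    ultimately have Sge: "S (\<theta> s i) \<ge> c1 * \<delta> powr p"
      using Sy by linarith
    have cpos: "c > 0" using cs Rpos by (simp add: c_def)
    have Rspos: "Rt s > 0" using cpos Rs by linarith
    have A: "\<kappa> * Rt s * S (\<theta> s i) \<ge> \<kappa> * Rt s * (c1 * \<delta> powr p)"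
      using Sge \<kappa> Rspos by (intro mult_left_mono) auto
    have B: "(\<kappa> * c1 * \<delta> powr p) * Rt s > (\<kappa> * c1 * \<delta> powr p) * c"
      using Rs \<kappa> cs \<delta> by (intro mult_strict_left_mono) auto
    have C: "(\<kappa> * c1 * \<delta> powr p) * c > \<Omega>"
      using \<delta>(4) by (simp add: c_def field_simps)
    have "\<bar>\<omega> i\<bar> \<le> \<Omega>" unfolding \<Omega>_def by (rule Max_ge) (use i in auto)
    hence "\<omega> i + \<kappa> * Rt s * S (\<theta> s i) > 0"
      using A B C by (simp add: algebra_simps abs_le_iff)
    thus ?thesis using der[OF i s] by blast
  qed
  have U1: "Rt T > c" if T: "T \<ge> 0" and hyp: "\<And>s. 0 \<le> s \<Longrightarrow> s < T \<Longrightarrow> Rt s > c" for T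
  proof -
    have tm: "I (\<theta> T j) \<ge> c3 * (I (x0 j) - R / 4)" if j: "j < N" for j
    proof (cases "\<bar>x0 j\<bar> \<le> pi - \<delta>")
      case True
      define b where "b = max \<bar>x0 j\<bar> \<alpha>0"
      have b: "\<alpha>0 \<le> b" "b \<le> pi - \<delta>" using True \<delta> by (auto simp: b_def)
      have contT: "continuous_on {0..T} (\<lambda>s. \<theta> s j)"
        by (rule continuous_on_subset[OF cont[OF j]]) auto
      have up: "\<theta> T j \<le> b"
      proof (rule barrier_up[where f="\<lambda>s. \<theta> s j" and a=0, OF contT])
        show "\<theta> 0 j \<le> b" using \<theta>0[OF j] by (auto simp: b_def)
      next
        fix s assume "0 \<le> s" "s < T" "\<theta> s j = b"
        thus "\<exists>v<0. ((\<lambda>s. \<theta> s j) has_real_derivative v) (at s within {0..})"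
          using drift_neg[OF j _ hyp, of s 0] b by auto
      qed (use T in auto)
      have down: "\<theta> T j \<ge> - b"
      proof (rule barrier_down[where f="\<lambda>s. \<theta> s j" and a=0, OF contT])
        show "\<theta> 0 j \<ge> - b" using \<theta>0[OF j] by (auto simp: b_def)
      next
        fix s assume "0 \<le> s" "s < T" "\<theta> s j = - b"
        thus "\<exists>v>0. ((\<lambda>s. \<theta> s j) has_real_derivative v) (at s within {0..})"
          using drift_pos[OF j _ hyp, of s 0] b by auto
      qed (use T in auto)
      have "\<bar>\<theta> T j\<bar> \<le> max \<bar>x0 j\<bar> \<alpha>0" using up down by (auto simp: b_def)
      hence "I (\<theta> T j) \<ge> c3 * I (x0 j)" using I_min x0 j by blast
      moreover have "c3 * (I (x0 j) - R / 4) \<le> c3 * I (x0 j)"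
        using cs Rpos by (intro mult_left_mono) auto
      ultimately show ?thesis by linarith
    next
      case False
      have "I (x0 j) \<le> c2 * (pi - \<bar>x0 j\<bar>) powr q" using I_bounds x0 j by blast
      also have "(pi - \<bar>x0 j\<bar>) powr q \<le> \<delta> powr q"
        using False x0 j pq by (intro powr_mono2) auto
      hence "c2 * (pi - \<bar>x0 j\<bar>) powr q \<le> c2 * \<delta> powr q" using cs by simp
      finally have "I (x0 j) \<le> R / 4" using \<delta> by linarith
      hence "c3 * (I (x0 j) - R / 4) \<le> 0" using cs by (simp add: mult_nonneg_nonpos)
      thus ?thesis using I_nonneg[of "\<theta> T j"] by linarith
    qed
    have "(\<Sum>j<N. I (\<theta> T j)) \<ge> (\<Sum>j<N. c3 * (I (x0 j) - R / 4))"
      by (rule sum_mono) (use tm in auto)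
    also have "(\<Sum>j<N. c3 * (I (x0 j) - R / 4)) = c3 * (\<Sum>j<N. I (x0 j)) - c3 * real N * R / 4"
      by (simp add: sum_distrib_left[symmetric] sum_subtractf algebra_simps)
    finally have "(\<Sum>j<N. I (\<theta> T j)) / real N \<ge> (c3 * (\<Sum>j<N. I (x0 j)) - c3 * real N * R / 4) / real N"
      using Npos by (intro divide_right_mono) auto
    also have "(c3 * (\<Sum>j<N. I (x0 j)) - c3 * real N * R / 4) / real N = c3 * ((\<Sum>j<N. I (x0 j)) / real N) - c3 * R / 4"
      using Npos by (simp add: field_simps)
    finally have "(\<Sum>j<N. I (\<theta> T j)) / real N \<ge> c3 * ((\<Sum>j<N. I (x0 j)) / real N) - c3 * R / 4" .
    moreover have "(\<Sum>j<N. I (x0 j)) / real N > R / 2" using R0 by (simp add: order_param_def)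
    hence "c3 * ((\<Sum>j<N. I (x0 j)) / real N) > c3 * (R / 2)" using cs by (intro mult_strict_left_mono) auto
    ultimately show ?thesis unfolding Rt_def order_param_def c_def by linarith
  qed
  have Rall: "Rt t > c" if "t \<ge> 0" for t
  proof (rule ccontr)
    assume "\<not> Rt t > c"
    define Z where "Z = {0..} \<inter> Rt -` {..c}"
    have Zcl: "closed Z" unfolding Z_def
      by (rule continuous_closed_preimage[OF contR]) auto
    have Zne: "Z \<noteq> {}" using that \<open>\<not> Rt t > c\<close> by (auto simp: Z_def)
    have Zbdd: "bdd_below Z" by (rule bdd_belowI[of _ 0]) (auto simp: Z_def)
    define T where "T = Inf Z"
    have TZ: "T \<in> Z" unfolding T_def by (rule closed_contains_Inf[OF Zne Zbdd Zcl])
    have "Rt s > c" if "0 \<le> s" "s < T" for s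
    proof (rule ccontr)
      assume "\<not> Rt s > c"
      hence "s \<in> Z" using that by (auto simp: Z_def)
      hence "T \<le> s" unfolding T_def using Zbdd by (rule cInf_lower)
      thus False using that by simp
    qed
    hence "Rt T > c" using U1 TZ by (auto simp: Z_def)
    thus False using TZ by (auto simp: Z_def)
  qed
  have range: "\<exists>lo hi. hi - lo < 2 * pi \<and> (\<forall>t\<ge>0. lo \<le> \<theta> t i \<and> \<theta> t i \<le> hi)" if i: "i < N" for i
  proof -
    define f where "f = (\<lambda>s. \<theta> s i)"
    have contf: "continuous_on {a..t} f" if "0 \<le> a" for a t
      unfolding f_def by (rule continuous_on_subset[OF cont[OF i]]) (use that in auto)
    have BU: "f t \<le> b" if "b - 2 * pi * of_int k \<in> {\<alpha>0..pi - \<delta>}" "0 \<le> a" "a \<le> t" "f a \<le> b" for b k a t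
    proof (rule barrier_up[where f=f and a=a, OF contf])
      fix s assume "a \<le> s" "s < t" "f s = b"
      thus "\<exists>v<0. (f has_real_derivative v) (at s within {0..})"
        using drift_neg[OF i _ Rall, of s k] that unfolding f_def by auto
    qed (use that in auto)
    have BD: "f t \<ge> b" if "b - 2 * pi * of_int k \<in> {-pi + \<delta>..-\<alpha>0}" "0 \<le> a" "a \<le> t" "f a \<ge> b" for b k a t
    proof (rule barrier_down[where f=f and a=a, OF contf])
      fix s assume "a \<le> s" "s < t" "f s = b"
      thus "\<exists>v>0. (f has_real_derivative v) (at s within {0..})"
        using drift_pos[OF i _ Rall, of s k] that unfolding f_def by auto
    qed (use that in auto)
    have f0: "f 0 = x0 i" using \<theta>0[OF i] by (simp add: f_def)
    have xr: "-pi \<le> x0 i" "x0 i \<le> pi" using x0 i by auto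
    have "\<exists>lo hi. hi - lo < 2 * pi \<and> (\<forall>t\<ge>0. lo \<le> f t \<and> f t \<le> hi)"
    proof (cases "\<bar>x0 i\<bar> \<le> pi - \<delta>")
      case True
      have "\<forall>t\<ge>0. - pi + \<delta> \<le> f t \<and> f t \<le> pi - \<delta>"
      proof safe
        fix t :: real assume t: "t \<ge> 0"
        show "f t \<le> pi - \<delta>" by (rule BU[of _ 0 0]) (use t \<delta> True f0 in auto)
        show "- pi + \<delta> \<le> f t" by (rule BD[of _ 0 0]) (use t \<delta> True f0 in auto)
      qed
      thus ?thesis using \<delta> by (intro exI[of _ "-pi+\<delta>"] exI[of _ "pi-\<delta>"]) auto
    next
      case False
      show ?thesis
      proof (cases "x0 i > 0")
        case True
        with False have xi: "x0 i > pi - \<delta>" by auto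
        have lo: "f t \<ge> - \<alpha>0" if "t \<ge> 0" for t
          by (rule BD[of _ 0 0]) (use that \<delta> xi f0 \<alpha>0 in auto)
        have hi: "f t \<le> 2 * pi + \<alpha>0" if "t \<ge> 0" for t
          by (rule BU[of _ 1 0]) (use that \<delta> xr f0 \<alpha>0 in auto)
        show ?thesis
        proof (cases "\<exists>t1\<ge>0. f t1 < pi - \<delta>")
          case True
          then obtain t1 where t1: "t1 \<ge> 0" "f t1 < pi - \<delta>" by blast
          have "f t \<le> pi + \<delta>" if t: "t \<ge> 0" for t
          proof (cases "t \<ge> t1")
            case True
            have "f t \<le> pi - \<delta>" by (rule BU[of _ 0 t1]) (use t1 True \<delta> in auto)
            thus ?thesis using \<delta> by simp
          next
            case False
            show ?thesis
            proof (rule ccontr)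
              assume "\<not> f t \<le> pi + \<delta>"
              hence ft: "f t \<ge> pi + \<delta>" by simp
              have "f t1 \<ge> pi + \<delta>"
              proof (rule BD[where b="pi + \<delta>" and k="1" and a=t])
                show "pi + \<delta> - 2 * pi * of_int 1 \<in> {-pi + \<delta>..-\<alpha>0}" using \<delta> by simp
              qed (use t False ft in simp_all)
              thus False using t1 \<delta> by simp
            qed
          qed
          thus ?thesis using lo \<delta> by (intro exI[of _ "-\<alpha>0"] exI[of _ "pi+\<delta>"]) auto
        next
          case False
          hence "\<forall>t\<ge>0. pi - \<delta> \<le> f t" by auto
          thus ?thesis using hi \<delta> by (intro exI[of _ "pi-\<delta>"] exI[of _ "2*pi+\<alpha>0"]) auto
        qed
      next
        case False2: False
        with False have xi: "x0 i < - pi + \<delta>" by auto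
        have hi: "f t \<le> \<alpha>0" if "t \<ge> 0" for t
        proof (rule BU[where b="\<alpha>0" and k=0 and a=0])
          show "\<alpha>0 - 2 * pi * of_int 0 \<in> {\<alpha>0..pi - \<delta>}" using \<delta> by simp
          show "f 0 \<le> \<alpha>0" using f0 xi \<delta> \<alpha>0 by linarith
        qed (use that in simp_all)
        have lo: "f t \<ge> - 2 * pi - \<alpha>0" if "t \<ge> 0" for t
        proof (rule BD[where b="- 2 * pi - \<alpha>0" and k="-1" and a=0])
          show "- 2 * pi - \<alpha>0 - 2 * pi * of_int (-1) \<in> {-pi + \<delta>..-\<alpha>0}" using \<delta> by simp
          show "f 0 \<ge> - 2 * pi - \<alpha>0" using f0 xr \<alpha>0 by linarith
        qed (use that in simp_all)
        show ?thesis
        proof (cases "\<exists>t1\<ge>0. f t1 > - pi + \<delta>")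
          case True
          then obtain t1 where t1: "t1 \<ge> 0" "f t1 > - pi + \<delta>" by blast
          have "f t \<ge> - pi - \<delta>" if t: "t \<ge> 0" for t
          proof (cases "t \<ge> t1")
            case True
            have "f t \<ge> - pi + \<delta>" by (rule BD[of _ 0 t1]) (use t1 True \<delta> in auto)
            thus ?thesis using \<delta> by simp
          next
            case False
            show ?thesis
            proof (rule ccontr)
              assume "\<not> f t \<ge> - pi - \<delta>"
              hence ft: "f t \<le> - pi - \<delta>" by simp
              have "f t1 \<le> - pi - \<delta>"
              proof (rule BU[where b="- pi - \<delta>" and k="-1" and a=t])
                show "- pi - \<delta> - 2 * pi * of_int (-1) \<in> {\<alpha>0..pi - \<delta>}" using \<delta> by simp
              qed (use t False ft in simp_all)
              thus False using t1 \<delta> by simp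
            qed
          qed
          thus ?thesis using hi \<delta> by (intro exI[of _ "-pi-\<delta>"] exI[of _ "\<alpha>0"]) auto
        next
          case False
          hence "\<forall>t\<ge>0. f t \<le> - pi + \<delta>" by auto
          thus ?thesis using lo \<delta> by (intro exI[of _ "- 2 * pi - \<alpha>0"] exI[of _ "-pi+\<delta>"]) auto
        qed
      qed
    qed
    thus ?thesis by (simp add: f_def)
  qed
  have "\<forall>i<N. bdd_above ((\<lambda>t. \<theta> t i) ` {0..}) \<and> bdd_below ((\<lambda>t. \<theta> t i) ` {0..}) \<and>
              (SUP t\<in>{0..}. \<theta> t i) - (INF t\<in>{0..}. \<theta> t i) < 2 * pi"
  proof (intro allI impI)
    fix i assume i: "i < N"
    obtain lo hi where lh: "hi - lo < 2 * pi" "\<And>t. t \<ge> 0 \<Longrightarrow> lo \<le> \<theta> t i \<and> \<theta> t i \<le> hi"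
      using range[OF i] by blast
    have ba: "bdd_above ((\<lambda>t. \<theta> t i) ` {0..})" using lh by (intro bdd_aboveI[of _ hi]) auto
    have bb: "bdd_below ((\<lambda>t. \<theta> t i) ` {0..})" using lh by (intro bdd_belowI[of _ lo]) auto
    have "(SUP t\<in>{0..}. \<theta> t i) \<le> hi" using lh by (intro cSUP_least) auto
    moreover have "(INF t\<in>{0..}. \<theta> t i) \<ge> lo" using lh by (intro cINF_greatest) auto
    ultimately show "bdd_above ((\<lambda>t. \<theta> t i) ` {0..}) \<and> bdd_below ((\<lambda>t. \<theta> t i) ` {0..}) \<and>
              (SUP t\<in>{0..}. \<theta> t i) - (INF t\<in>{0..}. \<theta> t i) < 2 * pi"
      using ba bb lh by linarith
  qed
  moreover have "\<forall>t\<ge>0. order_param I N (\<theta> t) > c3 * R / 4"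
    using Rall by (simp add: Rt_def c_def)
  ultimately show ?thesis by blast
qed

end

primrec picard :: "((nat \<Rightarrow> real) \<Rightarrow> nat \<Rightarrow> real) \<Rightarrow> (nat \<Rightarrow> real) \<Rightarrow> nat \<Rightarrow> real \<Rightarrow> nat \<Rightarrow> real" where
  "picard G x0 0 = (\<lambda>t i. x0 i)"
| "picard G x0 (Suc k) = (\<lambda>t i. x0 i + integral {0..t} (\<lambda>s. G (picard G x0 k s) i))"

locale kura_ode =
  fixes S I :: "real \<Rightarrow> real" and N :: nat and \<omega> :: "nat \<Rightarrow> real" and \<kappa> :: real
    and MS MI LS LI :: real
  assumes contS: "continuous_on UNIV S" and contI: "continuous_on UNIV I"
    and bS: "\<And>x. \<bar>S x\<bar> \<le> MS" and bI: "\<And>x. \<bar>I x\<bar> \<le> MI"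
    and lS: "\<And>x y. \<bar>S x - S y\<bar> \<le> LS * \<bar>x - y\<bar>"
    and lI: "\<And>x y. \<bar>I x - I y\<bar> \<le> LI * \<bar>x - y\<bar>"
    and N: "N \<ge> 1"
begin

definition F :: "(nat \<Rightarrow> real) \<Rightarrow> nat \<Rightarrow> real" where
  "F \<theta> i = \<omega> i + \<kappa> / real N * (\<Sum>j<N. I (\<theta> j)) * S (\<theta> i)"

definition K0 where "K0 = \<bar>\<kappa>\<bar> * (LI * MS + MI * LS)"
definition K where "K = K0 + 1"
definition B where "B i = \<bar>\<omega> i\<bar> + \<bar>\<kappa>\<bar> * MI * MS"

lemma MS: "MS \<ge> 0" using bS[of 0] by linarith
lemma MI: "MI \<ge> 0" using bI[of 0] by linarith
lemma LS: "LS \<ge> 0" using lS[of 1 0] by simp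
lemma LI: "LI \<ge> 0" using lI[of 1 0] by simp
lemma K0: "K0 \<ge> 0" using MS MI LS LI by (simp add: K0_def)
lemma K: "K > 0" "K0 \<le> K" using K0 by (auto simp: K_def)
lemma Npos: "real N > 0" using N by simp

lemma isContS: "isCont S x" using contS by (simp add: continuous_on_eq_continuous_at)
lemma isContI: "isCont I x" using contI by (simp add: continuous_on_eq_continuous_at)

lemma F_bound: "\<bar>F \<theta> i\<bar> \<le> B i"
proof -
  have "\<bar>\<Sum>j<N. I (\<theta> j)\<bar> \<le> (\<Sum>j<N. \<bar>I (\<theta> j)\<bar>)" by (rule sum_abs)
  also have "\<dots> \<le> (\<Sum>j<N. MI)" by (rule sum_mono) (rule bI)
  finally have s: "\<bar>\<Sum>j<N. I (\<theta> j)\<bar> \<le> real N * MI" by simp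
  have "\<bar>\<kappa> / real N * (\<Sum>j<N. I (\<theta> j)) * S (\<theta> i)\<bar>
      = \<bar>\<kappa>\<bar> / real N * \<bar>\<Sum>j<N. I (\<theta> j)\<bar> * \<bar>S (\<theta> i)\<bar>"
    by (simp add: abs_mult)
  also have "\<dots> \<le> \<bar>\<kappa>\<bar> / real N * (real N * MI) * MS"
    using s bS[of "\<theta> i"] Npos MI
    by (intro mult_mono mult_left_mono) (auto intro: divide_nonneg_pos)
  also have "\<dots> = \<bar>\<kappa>\<bar> * MI * MS" using Npos by simp
  finally show ?thesis unfolding F_def B_def by linarith
qed

lemma F_diff_i:
  "\<bar>F \<theta> i - F \<eta> i\<bar> \<le> \<bar>\<kappa>\<bar> / real N * (LI * MS * (\<Sum>j<N. \<bar>\<theta> j - \<eta> j\<bar>) + real N * MI * LS * \<bar>\<theta> i - \<eta> i\<bar>)"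
proof -
  define A where "A = (\<Sum>j<N. I (\<theta> j))"
  define A' where "A' = (\<Sum>j<N. I (\<eta> j))"
  define D where "D = (\<Sum>j<N. \<bar>\<theta> j - \<eta> j\<bar>)"
  have AA: "\<bar>A - A'\<bar> \<le> LI * D"
  proof -
    have "\<bar>A - A'\<bar> = \<bar>\<Sum>j<N. I (\<theta> j) - I (\<eta> j)\<bar>" by (simp add: A_def A'_def sum_subtractf)
    also have "\<dots> \<le> (\<Sum>j<N. \<bar>I (\<theta> j) - I (\<eta> j)\<bar>)" by (rule sum_abs)
    also have "\<dots> \<le> (\<Sum>j<N. LI * \<bar>\<theta> j - \<eta> j\<bar>)" by (rule sum_mono) (rule lI)
    finally show ?thesis by (simp add: D_def sum_distrib_left)
  qed
  have A': "\<bar>A'\<bar> \<le> real N * MI"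
  proof -
    have "\<bar>A'\<bar> \<le> (\<Sum>j<N. \<bar>I (\<eta> j)\<bar>)" unfolding A'_def by (rule sum_abs)
    also have "\<dots> \<le> (\<Sum>j<N. MI)" by (rule sum_mono) (rule bI)
    finally show ?thesis by simp
  qed
  have "A * S (\<theta> i) - A' * S (\<eta> i) = (A - A') * S (\<theta> i) + A' * (S (\<theta> i) - S (\<eta> i))"
    by (simp add: algebra_simps)
  hence "\<bar>A * S (\<theta> i) - A' * S (\<eta> i)\<bar> \<le> \<bar>A - A'\<bar> * \<bar>S (\<theta> i)\<bar> + \<bar>A'\<bar> * \<bar>S (\<theta> i) - S (\<eta> i)\<bar>"
    by (metis abs_mult abs_triangle_ineq)
  also have "\<dots> \<le> (LI * D) * MS + (real N * MI) * (LS * \<bar>\<theta> i - \<eta> i\<bar>)"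
    using AA A' bS[of "\<theta> i"] lS[of "\<theta> i" "\<eta> i"] LI MI
    by (intro add_mono mult_mono) (auto simp: D_def intro: sum_nonneg)
  finally have *: "\<bar>A * S (\<theta> i) - A' * S (\<eta> i)\<bar> \<le> LI * MS * D + real N * MI * LS * \<bar>\<theta> i - \<eta> i\<bar>"
    by (simp add: algebra_simps)
  have "F \<theta> i - F \<eta> i = \<kappa> / real N * (A * S (\<theta> i) - A' * S (\<eta> i))"
    by (simp add: F_def A_def A'_def algebra_simps)
  hence "\<bar>F \<theta> i - F \<eta> i\<bar> = \<bar>\<kappa>\<bar> / real N * \<bar>A * S (\<theta> i) - A' * S (\<eta> i)\<bar>"
    by (simp add: abs_mult)
  also have "\<dots> \<le> \<bar>\<kappa>\<bar> / real N * (LI * MS * D + real N * MI * LS * \<bar>\<theta> i - \<eta> i\<bar>)"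
    using * Npos by (intro mult_left_mono) auto
  finally show ?thesis by (simp add: D_def)
qed

lemma F_lip_sum:
  "(\<Sum>i<N. \<bar>F \<theta> i - F \<eta> i\<bar>) \<le> K0 * (\<Sum>j<N. \<bar>\<theta> j - \<eta> j\<bar>)"
proof -
  define D where "D = (\<Sum>j<N. \<bar>\<theta> j - \<eta> j\<bar>)"
  define a where "a = \<bar>\<kappa>\<bar> / real N"
  define X where "X = LI * MS * D"
  define Y where "Y = real N * MI * LS"
  have "(\<Sum>i<N. \<bar>F \<theta> i - F \<eta> i\<bar>) \<le> (\<Sum>i<N. a * (X + Y * \<bar>\<theta> i - \<eta> i\<bar>))"
    by (rule sum_mono) (use F_diff_i in \<open>simp add: D_def a_def X_def Y_def\<close>)
  also have "\<dots> = a * (\<Sum>i<N. X + Y * \<bar>\<theta> i - \<eta> i\<bar>)" by (simp add: sum_distrib_left)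
  also have "(\<Sum>i<N. X + Y * \<bar>\<theta> i - \<eta> i\<bar>) = real N * X + Y * D"
    by (simp add: sum.distrib sum_distrib_left[symmetric] D_def)
  also have "a * (real N * X + Y * D) = K0 * D"
    using Npos by (simp add: K0_def a_def X_def Y_def field_simps)
  finally show ?thesis by (simp add: D_def)
qed

lemma F_lip_sq:
  "(\<Sum>i<N. (\<theta> i - \<eta> i) * (F \<theta> i - F \<eta> i)) \<le> K0 * (\<Sum>i<N. (\<theta> i - \<eta> i)\<^sup>2)"
proof -
  define D where "D = (\<Sum>j<N. \<bar>\<theta> j - \<eta> j\<bar>)"
  define Q where "Q = (\<Sum>i<N. (\<theta> i - \<eta> i)\<^sup>2)"
  have DQ: "D\<^sup>2 \<le> real N * Q"
    using sum_squared_le_sum_of_squares[of "\<lambda>j. \<bar>\<theta> j - \<eta> j\<bar>" "{..<N}"]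
    by (simp add: D_def Q_def mult.commute)
  have "(\<Sum>i<N. (\<theta> i - \<eta> i) * (F \<theta> i - F \<eta> i)) \<le> (\<Sum>i<N. \<bar>\<theta> i - \<eta> i\<bar> * \<bar>F \<theta> i - F \<eta> i\<bar>)"
    by (rule sum_mono) (metis abs_ge_self abs_mult)
  also have "\<dots> \<le> (\<Sum>i<N. \<bar>\<theta> i - \<eta> i\<bar> * (\<bar>\<kappa>\<bar> / real N * (LI * MS * D + real N * MI * LS * \<bar>\<theta> i - \<eta> i\<bar>)))"
    by (rule sum_mono, rule mult_left_mono) (use F_diff_i in \<open>simp_all add: D_def\<close>)
  also have "\<dots> = (\<Sum>i<N. (\<bar>\<kappa>\<bar> / real N * (LI * MS) * D) * \<bar>\<theta> i - \<eta> i\<bar> + (\<bar>\<kappa>\<bar> * MI * LS) * (\<theta> i - \<eta> i)\<^sup>2)"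
  proof (rule sum.cong)
    fix i assume "i \<in> {..<N}"
    have "\<bar>\<theta> i - \<eta> i\<bar> * \<bar>\<theta> i - \<eta> i\<bar> = (\<theta> i - \<eta> i)\<^sup>2" by (simp add: power2_eq_square abs_mult_self_eq)
    thus "\<bar>\<theta> i - \<eta> i\<bar> * (\<bar>\<kappa>\<bar> / real N * (LI * MS * D + real N * MI * LS * \<bar>\<theta> i - \<eta> i\<bar>)) =
      (\<bar>\<kappa>\<bar> / real N * (LI * MS) * D) * \<bar>\<theta> i - \<eta> i\<bar> + (\<bar>\<kappa>\<bar> * MI * LS) * (\<theta> i - \<eta> i)\<^sup>2"
      using Npos by (simp add: field_simps)
  qed simp
  also have "\<dots> = \<bar>\<kappa>\<bar> / real N * (LI * MS) * D * D + \<bar>\<kappa>\<bar> * MI * LS * Q"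
  proof -
    define c where "c = \<bar>\<kappa>\<bar> / real N * (LI * MS) * D"
    define e where "e = \<bar>\<kappa>\<bar> * MI * LS"
    have "(\<Sum>i<N. c * \<bar>\<theta> i - \<eta> i\<bar> + e * (\<theta> i - \<eta> i)\<^sup>2) = c * D + e * Q"
      by (simp add: sum.distrib sum_distrib_left[symmetric] D_def Q_def)
    thus ?thesis by (simp add: c_def e_def)
  qed
  finally have main: "(\<Sum>i<N. (\<theta> i - \<eta> i) * (F \<theta> i - F \<eta> i)) \<le>
      \<bar>\<kappa>\<bar> / real N * (LI * MS) * D * D + \<bar>\<kappa>\<bar> * MI * LS * Q" .
  have "\<bar>\<kappa>\<bar> / real N * (LI * MS) * (D * D) \<le> \<bar>\<kappa>\<bar> / real N * (LI * MS) * (real N * Q)"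
    using DQ MS LI Npos by (intro mult_left_mono) (auto simp: power2_eq_square)
  hence T1: "\<bar>\<kappa>\<bar> / real N * (LI * MS) * D * D \<le> \<bar>\<kappa>\<bar> * LI * MS * Q"
    using Npos by (simp add: mult.assoc)
  have "K0 * Q = \<bar>\<kappa>\<bar> * LI * MS * Q + \<bar>\<kappa>\<bar> * MI * LS * Q" by (simp add: K0_def algebra_simps)
  thus ?thesis using main T1 by (simp add: Q_def)
qed

end

context kura_ode
begin

lemma F_cont:
  assumes "\<And>j. j < N \<Longrightarrow> continuous_on A (\<lambda>s. \<theta> s j)" "i < N"
  shows "continuous_on A (\<lambda>s. F (\<theta> s) i)"
  unfolding F_def
  by (intro continuous_intros continuous_on_compose2[OF contI assms(1)]
      continuous_on_compose2[OF contS assms(1)] assms(2)) (use N in auto)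

lemma pic_cont: "i < N \<Longrightarrow> continuous_on {0..T} (\<lambda>t. picard F x0 k t i)"
proof (induction k arbitrary: i)
  case 0
  show ?case by simp
next
  case (Suc k)
  have g: "continuous_on {0..T} (\<lambda>s. F (picard F x0 k s) i)"
    by (rule F_cont[OF Suc.IH Suc.prems])
  show ?case unfolding continuous_on_eq_continuous_within
  proof
    fix t assume t: "t \<in> {0..T}"
    have "((\<lambda>t. x0 i + integral {0..t} (\<lambda>s. F (picard F x0 k s) i)) has_real_derivative
           (0 + F (picard F x0 k t) i)) (at t within {0..T})"
      by (intro DERIV_add DERIV_const integral_has_real_derivative[OF g t])
    thus "continuous (at t within {0..T}) (\<lambda>t. picard F x0 (Suc k) t i)"
      by (simp add: DERIV_continuous)
  qed
qed

lemma pic_deriv: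
  assumes "i < N" "t \<in> {0..T}"
  shows "((\<lambda>t. picard F x0 (Suc k) t i) has_real_derivative F (picard F x0 k t) i) (at t within {0..T})"
proof -
  have g: "continuous_on {0..T} (\<lambda>s. F (picard F x0 k s) i)"
    by (rule F_cont[OF pic_cont assms(1)])
  have "((\<lambda>t. x0 i + integral {0..t} (\<lambda>s. F (picard F x0 k s) i)) has_real_derivative
           (0 + F (picard F x0 k t) i)) (at t within {0..T})"
    by (intro DERIV_add DERIV_const integral_has_real_derivative[OF g assms(2)])
  thus ?thesis by simp
qed

lemma pic_lip:
  assumes "i < N" "0 \<le> t" "0 \<le> t'"
  shows "\<bar>picard F x0 (Suc k) t i - picard F x0 (Suc k) t' i\<bar> \<le> B i * \<bar>t - t'\<bar>"
proof -
  define T where "T = max t t'"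
  have "norm (picard F x0 (Suc k) t i - picard F x0 (Suc k) t' i) \<le> B i * norm (t - t')"
  proof (rule field_differentiable_bound[where S="{0..T}"])
    fix z assume "z \<in> {0..T}"
    thus "((\<lambda>t. picard F x0 (Suc k) t i) has_field_derivative F (picard F x0 k z) i) (at z within {0..T})"
      by (rule pic_deriv[OF assms(1)])
  next
    fix z show "norm (F (picard F x0 k z) i) \<le> B i" using F_bound by simp
  qed (use assms in \<open>auto simp: T_def\<close>)
  thus ?thesis by simp
qed

lemma pic_integrable: "i < N \<Longrightarrow> (\<lambda>s. F (picard F x0 k s) i) integrable_on {0..t}"
  by (intro integrable_continuous_real F_cont pic_cont)

definition Ac where "Ac x0 = (\<Sum>i<N. \<bar>F x0 i\<bar>) / K"

lemma Ac: "Ac x0 \<ge> 0" using K by (simp add: Ac_def sum_nonneg)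

lemma exp_int:
  assumes "0 \<le> t"
  shows "integral {0..t} (\<lambda>s. exp (2 * K * s)) = (exp (2 * K * t) - 1) / (2 * K)"
proof -
  have "((\<lambda>s. exp (2 * K * s)) has_integral
        ((\<lambda>s. exp (2 * K * s) / (2 * K)) t - (\<lambda>s. exp (2 * K * s) / (2 * K)) 0)) {0..t}"
  proof (rule fundamental_theorem_of_calculus[OF assms])
    fix x assume "x \<in> {0..t}"
    have "((\<lambda>s. exp (2 * K * s) / (2 * K)) has_real_derivative exp (2 * K * x)) (at x within {0..t})"
      using K by (auto intro!: derivative_eq_intros)
    thus "((\<lambda>s. exp (2 * K * s) / (2 * K)) has_vector_derivative exp (2 * K * x)) (at x within {0..t})"
      by (simp add: has_real_derivative_iff_has_vector_derivative)
  qed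
  hence "integral {0..t} (\<lambda>s. exp (2 * K * s)) = exp (2 * K * t) / (2 * K) - 1 / (2 * K)"
    by (simp add: integral_unique)
  thus ?thesis by (simp add: diff_divide_distrib)
qed

lemma pic_diff:
  assumes "0 \<le> t"
  shows "(\<Sum>i<N. \<bar>picard F x0 (Suc k) t i - picard F x0 k t i\<bar>) \<le> Ac x0 * (1/2)^k * exp (2 * K * t)"
  using assms
proof (induction k arbitrary: t)
  case 0
  have e: "picard F x0 (Suc 0) t i - picard F x0 0 t i = t * F x0 i" for i
    using 0 by (simp add: integral_const_real)
  have "(\<Sum>i<N. \<bar>picard F x0 (Suc 0) t i - picard F x0 0 t i\<bar>) = t * (\<Sum>i<N. \<bar>F x0 i\<bar>)"
    using 0 by (simp add: e abs_mult sum_distrib_left)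
  also have "\<dots> = Ac x0 * (K * t)" using K by (simp add: Ac_def)
  also have "K * t \<le> exp (2 * K * t)"
  proof -
    have "1 + 2 * K * t \<le> exp (2 * K * t)" by (rule exp_ge_add_one_self)
    moreover have "0 \<le> K * t" using K 0 by simp
    ultimately show ?thesis by linarith
  qed
  hence "Ac x0 * (K * t) \<le> Ac x0 * exp (2 * K * t)" using Ac by (rule mult_left_mono)
  finally show ?case by simp
next
  case (Suc k)
  define P where "P = picard F x0"
  define h where "h = (\<lambda>i s. F (P (Suc k) s) i - F (P k s) i)"
  have hint: "h i integrable_on {0..t}" if "i < N" for i
    unfolding h_def P_def by (intro integrable_diff pic_integrable that)
  have habs: "(\<lambda>s. \<bar>h i s\<bar>) integrable_on {0..t}" if "i < N" for i
    unfolding h_def P_def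
    by (intro integrable_continuous_real continuous_intros F_cont pic_cont that)
  have eq: "P (Suc (Suc k)) t i - P (Suc k) t i = integral {0..t} (h i)" if "i < N" for i
    using integral_diff[OF pic_integrable[OF that, where k="Suc k"] pic_integrable[OF that, where k=k]]
    by (simp add: P_def h_def)
  have "(\<Sum>i<N. \<bar>P (Suc (Suc k)) t i - P (Suc k) t i\<bar>) \<le> (\<Sum>i<N. integral {0..t} (\<lambda>s. \<bar>h i s\<bar>))"
  proof (rule sum_mono)
    fix i assume "i \<in> {..<N}"
    hence i: "i < N" by simp
    have "norm (integral {0..t} (h i)) \<le> integral {0..t} (\<lambda>s. \<bar>h i s\<bar>)"
      by (rule Henstock_Kurzweil_Integration.integral_norm_bound_integral[OF hint[OF i] habs[OF i]]) simp
    thus "\<bar>P (Suc (Suc k)) t i - P (Suc k) t i\<bar> \<le> integral {0..t} (\<lambda>s. \<bar>h i s\<bar>)"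
      using eq[OF i] by simp
  qed
  also have "\<dots> = integral {0..t} (\<lambda>s. \<Sum>i<N. \<bar>h i s\<bar>)"
    by (rule integral_sum[symmetric]) (use habs in auto)
  also have "\<dots> \<le> integral {0..t} (\<lambda>s. K0 * (Ac x0 * (1/2)^k) * exp (2 * K * s))"
  proof (rule integral_le)
    show "(\<lambda>s. \<Sum>i<N. \<bar>h i s\<bar>) integrable_on {0..t}"
      by (intro integrable_continuous_real continuous_intros) (unfold h_def P_def,
          intro continuous_intros F_cont pic_cont, auto)
    show "(\<lambda>s. K0 * (Ac x0 * (1/2)^k) * exp (2 * K * s)) integrable_on {0..t}"
      by (intro integrable_continuous_real continuous_intros)
  next
    fix s assume s: "s \<in> {0..t}"
    have "(\<Sum>i<N. \<bar>h i s\<bar>) \<le> K0 * (\<Sum>j<N. \<bar>P (Suc k) s j - P k s j\<bar>)"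
      unfolding h_def by (rule F_lip_sum)
    also have "\<dots> \<le> K0 * (Ac x0 * (1/2)^k * exp (2 * K * s))"
      using Suc.IH[of s] s K0 by (intro mult_left_mono) (auto simp: P_def)
    finally show "(\<Sum>i<N. \<bar>h i s\<bar>) \<le> K0 * (Ac x0 * (1/2)^k) * exp (2 * K * s)"
      by (simp add: mult.assoc)
  qed
  also have "\<dots> = K0 * (Ac x0 * (1/2)^k) * ((exp (2 * K * t) - 1) / (2 * K))"
    using exp_int[OF Suc.prems] by simp
  also have "\<dots> \<le> Ac x0 * (1/2)^Suc k * exp (2 * K * t)"
  proof -
    have a: "Ac x0 * (1/2)^k \<ge> 0" using Ac by simp
    have "K0 * ((exp (2 * K * t) - 1) / (2 * K)) \<le> K * (exp (2 * K * t) / (2 * K))"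
      using K K0 Suc.prems by (intro mult_mono divide_right_mono) auto
    also have "\<dots> = exp (2 * K * t) / 2" using K by simp
    finally have "(Ac x0 * (1/2)^k) * (K0 * ((exp (2 * K * t) - 1) / (2 * K))) \<le>
                  (Ac x0 * (1/2)^k) * (exp (2 * K * t) / 2)"
      using a by (rule mult_left_mono)
    thus ?thesis by (simp add: algebra_simps)
  qed
  finally show ?case by (simp add: P_def)
qed

end

lemma deriv_cont_on':
  assumes "\<And>t. t \<ge> 0 \<Longrightarrow> (f has_real_derivative f' t) (at t within {0..})"
  shows "continuous_on {0..} f"
  unfolding continuous_on_eq_continuous_within
  using assms by (auto intro: DERIV_continuous)

lemma at_within_interior_nonneg:
  fixes x :: real assumes "x > 0" shows "at x within {0..} = at x"
proof -
  have "at x within {0..} = at x within UNIV"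
    by (rule at_within_nhd[of x "{0<..}"]) (use assms in auto)
  thus ?thesis by simp
qed

context kura_ode
begin

lemma F_tendsto:
  assumes "\<And>j. j < N \<Longrightarrow> (\<lambda>k. X k j) \<longlonglongrightarrow> Y j" "i < N"
  shows "(\<lambda>k. F (X k) i) \<longlonglongrightarrow> F Y i"
  unfolding F_def
  by (intro tendsto_intros isCont_tendsto_compose[OF isContI] isCont_tendsto_compose[OF isContS] assms) auto

definition solx where "solx x0 t i = lim (\<lambda>k. picard F x0 k t i)"

lemma pic_conv:
  assumes "0 \<le> t" "i < N"
  shows "(\<lambda>k. picard F x0 k t i) \<longlonglongrightarrow> solx x0 t i"
proof -
  define d where "d = (\<lambda>k. picard F x0 (Suc k) t i - picard F x0 k t i)"
  define c where "c = Ac x0 * exp (2 * K * t)"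
  have dle: "norm (d k) \<le> c * (1/2)^k" for k
  proof -
    have "\<bar>d k\<bar> \<le> (\<Sum>j<N. \<bar>picard F x0 (Suc k) t j - picard F x0 k t j\<bar>)"
      unfolding d_def by (rule member_le_sum[where f="\<lambda>j. \<bar>picard F x0 (Suc k) t j - picard F x0 k t j\<bar>"]) (use assms in auto)
    also have "\<dots> \<le> Ac x0 * (1/2)^k * exp (2 * K * t)" by (rule pic_diff[OF assms(1)])
    finally show ?thesis by (simp add: c_def mult_ac)
  qed
  have "summable (\<lambda>k. c * (1/2::real)^k)" by (intro summable_mult summable_geometric) simp
  hence sd: "summable d" by (rule summable_comparison_test'[where N=0]) (use dle in auto)
  have "(\<lambda>n. \<Sum>k<n. d k) \<longlonglongrightarrow> suminf d" by (rule summable_LIMSEQ[OF sd])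
  moreover have "(\<Sum>k<n. d k) = picard F x0 n t i - x0 i" for n
    unfolding d_def by (subst sum_lessThan_telescope) simp
  ultimately have "(\<lambda>n. picard F x0 n t i - x0 i) \<longlonglongrightarrow> suminf d" by simp
  hence "(\<lambda>n. (picard F x0 n t i - x0 i) + x0 i) \<longlonglongrightarrow> suminf d + x0 i"
    by (intro tendsto_intros)
  hence "convergent (\<lambda>k. picard F x0 k t i)" by (auto simp: convergent_def)
  thus ?thesis by (simp add: solx_def convergent_LIMSEQ_iff)
qed

lemma solx_lip:
  assumes "i < N" "0 \<le> t" "0 \<le> t'"
  shows "\<bar>solx x0 t i - solx x0 t' i\<bar> \<le> B i * \<bar>t - t'\<bar>"
proof -
  have "(\<lambda>k. \<bar>picard F x0 (Suc k) t i - picard F x0 (Suc k) t' i\<bar>) \<longlonglongrightarrow> \<bar>solx x0 t i - solx x0 t' i\<bar>"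
    by (intro tendsto_intros LIMSEQ_Suc pic_conv assms)
  thus ?thesis by (rule LIMSEQ_le_const2) (use pic_lip[OF assms] in auto)
qed

lemma B_nonneg: "B i \<ge> 0" using MI MS by (simp add: B_def)

lemma solx_cont: "i < N \<Longrightarrow> continuous_on {0..} (\<lambda>t. solx x0 t i)"
  by (rule lipschitz_on_continuous_on[of "B i"], rule lipschitz_onI)
     (auto simp: dist_real_def intro: solx_lip B_nonneg)

lemma solx_int:
  assumes "0 \<le> t" "i < N"
  shows "solx x0 t i = x0 i + integral {0..t} (\<lambda>s. F (solx x0 s) i)"
proof -
  have conv: "(\<lambda>k. F (picard F x0 k s) i) \<longlonglongrightarrow> F (solx x0 s) i" if "s \<in> {0..t}" for s
  proof -
    have j: "(\<lambda>k. picard F x0 k s j) \<longlonglongrightarrow> solx x0 s j" if "j < N" for j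
      using pic_conv[of s j] that \<open>s \<in> {0..t}\<close> by auto
    show ?thesis by (rule F_tendsto[OF j assms(2)])
  qed
  have dc: "(\<lambda>k. integral {0..t} (\<lambda>s. F (picard F x0 k s) i)) \<longlonglongrightarrow> integral {0..t} (\<lambda>s. F (solx x0 s) i)"
  proof (rule dominated_convergence(2))
    show "(\<lambda>s. F (picard F x0 k s) i) integrable_on {0..t}" for k by (rule pic_integrable[OF assms(2)])
    show "(\<lambda>s. B i) integrable_on {0..t}" by (rule integrable_continuous_real) simp
    show "norm (F (picard F x0 k s) i) \<le> B i" for k s using F_bound by simp
  qed (use conv in auto)
  hence "(\<lambda>k. picard F x0 (Suc k) t i) \<longlonglongrightarrow> x0 i + integral {0..t} (\<lambda>s. F (solx x0 s) i)"
    by (simp add: tendsto_add_const_iff)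
  moreover have "(\<lambda>k. picard F x0 (Suc k) t i) \<longlonglongrightarrow> solx x0 t i"
    by (intro LIMSEQ_Suc pic_conv assms)
  ultimately show ?thesis using LIMSEQ_unique by blast
qed

lemma solx_deriv:
  assumes "0 \<le> t" "i < N"
  shows "((\<lambda>t. solx x0 t i) has_real_derivative F (solx x0 t) i) (at t within {0..})"
proof -
  define T where "T = t + 1"
  define g where "g = (\<lambda>s. F (solx x0 s) i)"
  have gc: "continuous_on {0..T} g" unfolding g_def
    by (rule F_cont[OF continuous_on_subset[OF solx_cont] assms(2)]) auto
  have tT: "t \<in> {0..T}" using assms by (simp add: T_def)
  have "((\<lambda>s. x0 i + integral {0..s} g) has_real_derivative (0 + g t)) (at t within {0..T})"
    by (intro DERIV_add DERIV_const integral_has_real_derivative[OF gc tT])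
  hence "((\<lambda>s. x0 i + integral {0..s} g) has_real_derivative g t) (at t within {0..T})" by simp
  hence "((\<lambda>s. solx x0 s i) has_real_derivative g t) (at t within {0..T})"
    by (rule has_field_derivative_transform_within[where d=1]) (use tT solx_int[OF _ assms(2)] in \<open>auto simp: g_def\<close>)
  moreover have "at t within {0..} = at t within {0..T}"
    by (rule at_within_nhd[of t "{..<T}"]) (auto simp: T_def)
  ultimately show ?thesis by (simp add: g_def)
qed

theorem solx_is_solution: "is_solution S I N \<omega> \<kappa> x0 (solx x0)"
  unfolding is_solution_def
proof safe
  fix i assume i: "i < N"
  show "solx x0 0 i = x0 i" using solx_int[of 0 i x0] i by simp
next
  fix i and t :: real assume i: "i < N" and t: "0 \<le> t"
  show "((\<lambda>s. solx x0 s i) has_real_derivative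
      \<omega> i + \<kappa> / real N * (\<Sum>j<N. I (solx x0 t j)) * S (solx x0 t i)) (at t within {0..})"
    using solx_deriv[OF t i] by (simp add: F_def)
qed

lemma sol_deriv_F:
  assumes "is_solution S I N \<omega> \<kappa> x \<theta>" "i < N" "0 \<le> t"
  shows "((\<lambda>s. \<theta> s i) has_real_derivative F (\<theta> t) i) (at t within {0..})"
  using assms unfolding is_solution_def F_def by blast

lemma stab:
  assumes sx: "is_solution S I N \<omega> \<kappa> x \<theta>" and sy: "is_solution S I N \<omega> \<kappa> y \<eta>" and t: "0 \<le> t"
  shows "(\<Sum>i<N. (\<theta> t i - \<eta> t i)\<^sup>2) \<le> exp (2 * K * t) * (\<Sum>i<N. (x i - y i)\<^sup>2)"
proof -
  define g where "g = (\<lambda>s. \<Sum>i<N. (\<theta> s i - \<eta> s i)\<^sup>2)"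
  define g' where "g' = (\<lambda>s. \<Sum>i<N. 2 * ((\<theta> s i - \<eta> s i) * (F (\<theta> s) i - F (\<eta> s) i)))"
  have dg: "(g has_real_derivative g' s) (at s within {0..})" if s: "0 \<le> s" for s
    unfolding g_def g'_def
  proof (rule DERIV_sum)
    fix i assume "i \<in> {..<N}"
    hence i: "i < N" by simp
    have du: "((\<lambda>s. \<theta> s i - \<eta> s i) has_real_derivative (F (\<theta> s) i - F (\<eta> s) i)) (at s within {0..})"
      by (rule DERIV_diff[OF sol_deriv_F[OF sx i s] sol_deriv_F[OF sy i s]])
    from DERIV_power[OF du, where n=2] show "((\<lambda>s. (\<theta> s i - \<eta> s i)\<^sup>2) has_real_derivative 2 * ((\<theta> s i - \<eta> s i) * (F (\<theta> s) i - F (\<eta> s) i)))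
          (at s within {0..})" by (simp add: mult_ac)
  qed
  have g_nn: "g s \<ge> 0" for s unfolding g_def by (intro sum_nonneg) auto
  have g'le: "g' s \<le> 2 * K * g s" for s
  proof -
    have "g' s = 2 * (\<Sum>i<N. (\<theta> s i - \<eta> s i) * (F (\<theta> s) i - F (\<eta> s) i))"
      by (simp add: g'_def sum_distrib_left)
    also have "\<dots> \<le> 2 * (K0 * g s)" unfolding g_def by (intro mult_left_mono F_lip_sq) auto
    also have "\<dots> \<le> 2 * (K * g s)" using K g_nn by (intro mult_left_mono mult_right_mono) auto
    finally show ?thesis by simp
  qed
  define h where "h = (\<lambda>s. exp (- (2 * K * s)) * g s)"
  have dh: "(h has_real_derivative (exp (- (2 * K * s)) * g' s + (- (2 * K) * exp (- (2 * K * s))) * g s)) (at s within {0..})"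
    if s: "0 \<le> s" for s
  proof -
    have e: "((\<lambda>s. exp (- (2 * K * s))) has_real_derivative (- (2 * K) * exp (- (2 * K * s)))) (at s within {0..})"
      by (auto intro!: derivative_eq_intros)
    show ?thesis unfolding h_def using DERIV_mult[OF e dg[OF s]] by (simp add: algebra_simps)
  qed
  have hc: "continuous_on {0..t} h"
    by (rule continuous_on_subset[OF deriv_cont_on'[OF dh]]) auto
  have "h t \<le> h 0"
  proof (rule DERIV_nonpos_imp_decreasing_open[OF t _ hc])
    fix s assume s: "0 < s" "s < t"
    have "exp (- (2 * K * s)) * g' s \<le> exp (- (2 * K * s)) * (2 * K * g s)"
      using g'le by (intro mult_left_mono) auto
    hence le: "exp (- (2 * K * s)) * g' s + (- (2 * K) * exp (- (2 * K * s))) * g s \<le> 0"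
      by (simp add: algebra_simps)
    have "DERIV h s :> (exp (- (2 * K * s)) * g' s + (- (2 * K) * exp (- (2 * K * s))) * g s)"
      using dh[of s] s at_within_interior_nonneg[OF s(1)] by simp
    thus "\<exists>y. DERIV h s :> y \<and> y \<le> 0" using le by blast
  qed
  moreover have "h 0 = (\<Sum>i<N. (x i - y i)\<^sup>2)"
    using sx sy by (simp add: h_def g_def is_solution_def)
  moreover have "g t = exp (2 * K * t) * h t"
    by (simp add: h_def exp_minus field_simps)
  ultimately have "g t \<le> exp (2 * K * t) * (\<Sum>i<N. (x i - y i)\<^sup>2)"
    using mult_left_mono[of "h t" "h 0" "exp (2 * K * t)"] by simp
  thus ?thesis by (simp add: g_def)
qed

lemma sol_unique:
  assumes "is_solution S I N \<omega> \<kappa> x \<theta>" "is_solution S I N \<omega> \<kappa> x \<eta>" "0 \<le> t" "i < N"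
  shows "\<theta> t i = \<eta> t i"
proof -
  have "(\<Sum>i<N. (\<theta> t i - \<eta> t i)\<^sup>2) \<le> 0" using stab[OF assms(1,2,3)] by simp
  hence "(\<Sum>i<N. (\<theta> t i - \<eta> t i)\<^sup>2) = 0" by (intro antisym sum_nonneg) auto
  hence "\<forall>i\<in>{..<N}. (\<theta> t i - \<eta> t i)\<^sup>2 = 0" by (subst (asm) sum_nonneg_eq_0_iff) auto
  thus ?thesis using assms(4) by auto
qed

lemma sol_close:
  assumes "is_solution S I N \<omega> \<kappa> x \<theta>" "is_solution S I N \<omega> \<kappa> y \<eta>" "0 \<le> t" "i < N"
  shows "\<bar>\<theta> t i - \<eta> t i\<bar> \<le> sqrt (exp (2 * K * t) * (\<Sum>j<N. (x j - y j)\<^sup>2))"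
proof -
  have "(\<theta> t i - \<eta> t i)\<^sup>2 \<le> (\<Sum>j<N. (\<theta> t j - \<eta> t j)\<^sup>2)"
    by (rule member_le_sum[where f="\<lambda>j. (\<theta> t j - \<eta> t j)\<^sup>2"]) (use assms in auto)
  also have "\<dots> \<le> exp (2 * K * t) * (\<Sum>j<N. (x j - y j)\<^sup>2)" by (rule stab[OF assms(1-3)])
  finally have "(\<theta> t i - \<eta> t i)\<^sup>2 \<le> exp (2 * K * t) * (\<Sum>j<N. (x j - y j)\<^sup>2)" .
  hence "sqrt ((\<theta> t i - \<eta> t i)\<^sup>2) \<le> sqrt (exp (2 * K * t) * (\<Sum>j<N. (x j - y j)\<^sup>2))"
    by (rule real_sqrt_le_mono)
  thus ?thesis by simp
qed

end

lemma rat_approx: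
  fixes t :: real assumes t: "0 \<le> t"
  obtains q :: "nat \<Rightarrow> rat" where "\<And>k. 0 \<le> real_of_rat (q k)" "\<And>k. real_of_rat (q k) \<le> t"
    "(\<lambda>k. real_of_rat (q k)) \<longlonglongrightarrow> t"
proof -
  define q :: "nat \<Rightarrow> rat" where "q k = of_int \<lfloor>t * real (Suc k)\<rfloor> / of_nat (Suc k)" for k
  have qe: "real_of_rat (q k) = of_int \<lfloor>t * real (Suc k)\<rfloor> / real (Suc k)" for k
    unfolding q_def of_rat_divide of_rat_of_int_eq of_rat_of_nat_eq ..
  have S: "real (Suc k) > 0" for k by simp
  have fl0: "0 \<le> (of_int \<lfloor>t * real (Suc k)\<rfloor> :: real)" for k using t by simp
  have lo: "0 \<le> real_of_rat (q k)" for k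
    unfolding qe by (rule divide_nonneg_pos[OF fl0 S])
  have hi: "real_of_rat (q k) \<le> t" for k
  proof -
    have "of_int \<lfloor>t * real (Suc k)\<rfloor> \<le> t * real (Suc k)" by (rule of_int_floor_le)
    thus ?thesis unfolding qe pos_divide_le_eq[OF S] .
  qed
  have lo2: "t - inverse (real (Suc k)) \<le> real_of_rat (q k)" for k
  proof -
    have "t * real (Suc k) - 1 \<le> of_int \<lfloor>t * real (Suc k)\<rfloor>" by linarith
    hence "(t * real (Suc k) - 1) / real (Suc k) \<le> real_of_rat (q k)"
      unfolding qe by (rule divide_right_mono) (use S[of k] in linarith)
    moreover have "(t * real (Suc k) - 1) / real (Suc k) = t - inverse (real (Suc k))"
      using S[of k] by (simp add: diff_divide_distrib inverse_eq_divide)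
    ultimately show ?thesis by simp
  qed
  have "(\<lambda>k. t - inverse (real (Suc k))) \<longlonglongrightarrow> t - 0"
    by (intro tendsto_intros LIMSEQ_inverse_real_of_nat)
  hence lim1: "(\<lambda>k. t - inverse (real (Suc k))) \<longlonglongrightarrow> t" by simp
  have "(\<lambda>k. real_of_rat (q k)) \<longlonglongrightarrow> t"
    by (rule tendsto_sandwich[OF always_eventually always_eventually lim1 tendsto_const])
       (use lo2 hi in blast)+
  thus ?thesis using that lo hi by blast
qed

lemma rat_closed:
  fixes g :: "real \<Rightarrow> 'a::topological_space"
  assumes cont: "continuous_on {0..T} g" and t: "0 \<le> t" "t \<le> T" and C: "closed C"
    and hyp: "\<And>q::rat. 0 \<le> real_of_rat q \<Longrightarrow> real_of_rat q \<le> T \<Longrightarrow> g (real_of_rat q) \<in> C"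
  shows "g t \<in> C"
proof -
  obtain q :: "nat \<Rightarrow> rat" where q: "\<And>k. 0 \<le> real_of_rat (q k)" "\<And>k. real_of_rat (q k) \<le> t"
    "(\<lambda>k. real_of_rat (q k)) \<longlonglongrightarrow> t"
    using rat_approx[OF t(1)] by blast
  have "(\<lambda>k. g (real_of_rat (q k))) \<longlonglongrightarrow> g t"
  proof (rule continuous_on_tendsto_compose[OF cont q(3)])
    show "t \<in> {0..T}" using t by simp
    show "\<forall>\<^sub>F k in sequentially. real_of_rat (q k) \<in> {0..T}"
    proof (intro always_eventually allI)
      fix k
      have "0 \<le> real_of_rat (q k)" "real_of_rat (q k) \<le> T" using q(1,2)[of k] t by linarith+
      thus "real_of_rat (q k) \<in> {0..T}" by simp
    qed
  qed
  moreover have "eventually (\<lambda>k. g (real_of_rat (q k)) \<in> C) sequentially"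
  proof (intro always_eventually allI)
    fix k
    have "0 \<le> real_of_rat (q k)" "real_of_rat (q k) \<le> T" using q(1,2)[of k] t by linarith+
    thus "g (real_of_rat (q k)) \<in> C" by (rule hyp)
  qed
  ultimately show ?thesis by (intro Lim_in_closed_set[OF C]) auto
qed

lemma rat_closed':
  fixes g :: "real \<Rightarrow> 'a::topological_space"
  assumes cont: "continuous_on {0..} g" and t: "0 \<le> t" and C: "closed C"
    and hyp: "\<And>q::rat. 0 \<le> real_of_rat q \<Longrightarrow> g (real_of_rat q) \<in> C"
  shows "g t \<in> C"
  by (rule rat_closed[where T=t, OF continuous_on_subset[OF cont]]) (use t C hyp in auto)

lemma good1_rat:
  fixes R :: "real \<Rightarrow> real"
  assumes cont: "continuous_on {0..} R"
  shows "(\<forall>t\<ge>0. R t > c) \<longleftrightarrow>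
    (\<forall>n::nat. \<exists>m::nat. \<forall>q\<in>{q::rat. 0 \<le> real_of_rat q \<and> real_of_rat q \<le> real n}. c + 1 / real (Suc m) \<le> R (real_of_rat q))"
proof
  assume A: "\<forall>t\<ge>0. R t > c"
  show "\<forall>n::nat. \<exists>m::nat. \<forall>q\<in>{q::rat. 0 \<le> real_of_rat q \<and> real_of_rat q \<le> real n}. c + 1 / real (Suc m) \<le> R (real_of_rat q)"
  proof
    fix n :: nat
    have "\<exists>x\<in>{0..real n}. \<forall>y\<in>{0..real n}. R x \<le> R y"
      by (rule continuous_attains_inf[OF compact_Icc _ continuous_on_subset[OF cont]]) auto
    then obtain x where x: "x \<in> {0..real n}" "\<And>y. y \<in> {0..real n} \<Longrightarrow> R x \<le> R y"
      by blast
    have "R x - c > 0" using A x by auto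
    then obtain m where m: "inverse (real (Suc m)) < R x - c" using reals_Archimedean by blast
    have "c + 1 / real (Suc m) \<le> R (real_of_rat q)" if "0 \<le> real_of_rat q" "real_of_rat q \<le> real n" for q
    proof -
      have "R x \<le> R (real_of_rat q)" using x(2)[of "real_of_rat q"] that by simp
      moreover have "inverse (real (Suc m)) = 1 / real (Suc m)" by (simp add: inverse_eq_divide)
      ultimately show ?thesis using m by linarith
    qed
    thus "\<exists>m::nat. \<forall>q\<in>{q::rat. 0 \<le> real_of_rat q \<and> real_of_rat q \<le> real n}. c + 1 / real (Suc m) \<le> R (real_of_rat q)"
      by blast
  qed
next
  assume B: "\<forall>n::nat. \<exists>m::nat. \<forall>q\<in>{q::rat. 0 \<le> real_of_rat q \<and> real_of_rat q \<le> real n}. c + 1 / real (Suc m) \<le> R (real_of_rat q)"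
  show "\<forall>t\<ge>0. R t > c"
  proof safe
    fix t :: real assume t: "0 \<le> t"
    obtain n :: nat where n: "t \<le> real n" using real_arch_simple by blast
    obtain m where m: "\<And>q. 0 \<le> real_of_rat q \<Longrightarrow> real_of_rat q \<le> real n \<Longrightarrow> c + 1 / real (Suc m) \<le> R (real_of_rat q)"
      using B by blast
    have "R t \<in> {c + 1 / real (Suc m)..}"
    proof (rule rat_closed[where T="real n", OF continuous_on_subset[OF cont]])
      show "closed {c + 1 / real (Suc m)..}" by (rule closed_atLeast)
      fix q :: rat assume "0 \<le> real_of_rat q" "real_of_rat q \<le> real n"
      thus "R (real_of_rat q) \<in> {c + 1 / real (Suc m)..}" using m by simp
    qed (use t n in auto)
    moreover have "1 / real (Suc m) > 0" by simp
    ultimately show "R t > c" unfolding atLeast_iff by linarith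
  qed
qed

lemma good2_rat:
  fixes f :: "real \<Rightarrow> real"
  assumes cont: "continuous_on {0..} f"
  shows "(bdd_above (f ` {0..}) \<and> bdd_below (f ` {0..}) \<and> (SUP t\<in>{0..}. f t) - (INF t\<in>{0..}. f t) < 2 * pi) \<longleftrightarrow>
    (\<exists>a::rat. \<exists>b::rat. real_of_rat b - real_of_rat a < 2 * pi \<and>
        (\<forall>q\<in>{q::rat. 0 \<le> real_of_rat q}. real_of_rat a \<le> f (real_of_rat q) \<and> f (real_of_rat q) \<le> real_of_rat b))"
proof
  assume A: "bdd_above (f ` {0..}) \<and> bdd_below (f ` {0..}) \<and> (SUP t\<in>{0..}. f t) - (INF t\<in>{0..}. f t) < 2 * pi"
  define hi where "hi = (SUP t\<in>{0..}. f t)"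
  define lo where "lo = (INF t\<in>{0..}. f t)"
  define gap where "gap = 2 * pi - (hi - lo)"
  have gap: "gap > 0" using A by (simp add: gap_def hi_def lo_def)
  obtain a where a: "a \<in> \<rat>" "lo - gap / 2 < a" "a < lo" using Rats_dense_in_real[of "lo - gap/2" lo] gap by auto
  obtain b where b: "b \<in> \<rat>" "hi < b" "b < hi + gap / 2" using Rats_dense_in_real[of hi "hi + gap/2"] gap by auto
  obtain a' where a': "a = real_of_rat a'" using a(1) by (auto elim: Rats_cases)
  obtain b' where b': "b = real_of_rat b'" using b(1) by (auto elim: Rats_cases)
  have "real_of_rat b' - real_of_rat a' < 2 * pi" using a(2,3) b(2,3) gap_def unfolding a' b' by linarith
  moreover have "real_of_rat a' \<le> f (real_of_rat q) \<and> f (real_of_rat q) \<le> real_of_rat b'" if "0 \<le> (real_of_rat q :: real)" for q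
  proof
    have "lo \<le> f (real_of_rat q)" unfolding lo_def using A that by (intro cINF_lower) auto
    thus "real_of_rat a' \<le> f (real_of_rat q)" using a a' by simp
    have "f (real_of_rat q) \<le> hi" unfolding hi_def using A that by (intro cSUP_upper) auto
    thus "f (real_of_rat q) \<le> real_of_rat b'" using b b' by simp
  qed
  ultimately show "\<exists>a::rat. \<exists>b::rat. real_of_rat b - real_of_rat a < 2 * pi \<and>
        (\<forall>q\<in>{q::rat. 0 \<le> real_of_rat q}. real_of_rat a \<le> f (real_of_rat q) \<and> f (real_of_rat q) \<le> real_of_rat b)" by blast
next
  assume "\<exists>a::rat. \<exists>b::rat. real_of_rat b - real_of_rat a < 2 * pi \<and>
        (\<forall>q\<in>{q::rat. 0 \<le> real_of_rat q}. real_of_rat a \<le> f (real_of_rat q) \<and> f (real_of_rat q) \<le> real_of_rat b)"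
  then obtain a b :: rat where ab: "real_of_rat b - real_of_rat a < 2 * pi"
    "\<And>q. 0 \<le> (real_of_rat q :: real) \<Longrightarrow> real_of_rat a \<le> f (real_of_rat q) \<and> f (real_of_rat q) \<le> real_of_rat b" by auto
  have bnd: "f t \<in> {real_of_rat a..real_of_rat b}" if "0 \<le> t" for t
    by (rule rat_closed'[OF cont that]) (use ab in auto)
  have ba: "bdd_above (f ` {0..})" using bnd by (intro bdd_aboveI[of _ "real_of_rat b"]) auto
  have bb: "bdd_below (f ` {0..})" using bnd by (intro bdd_belowI[of _ "real_of_rat a"]) auto
  have "(SUP t\<in>{0..}. f t) \<le> real_of_rat b" using bnd by (intro cSUP_least) auto
  moreover have "(INF t\<in>{0..}. f t) \<ge> real_of_rat a" using bnd by (intro cINF_greatest) auto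
  ultimately show "bdd_above (f ` {0..}) \<and> bdd_below (f ` {0..}) \<and> (SUP t\<in>{0..}. f t) - (INF t\<in>{0..}. f t) < 2 * pi"
    using ab ba bb by linarith
qed

context kura_ode
begin

lemma Phi_cont:
  assumes t: "0 \<le> t" and i: "i < N"
  shows "continuous_on UNIV (\<lambda>z::nat \<Rightarrow> real. solx z t i)"
proof (rule continuous_at_imp_continuous_on, intro ballI)
  fix z :: "nat \<Rightarrow> real"
  have proj: "((\<lambda>w::nat \<Rightarrow> real. w j) \<longlongrightarrow> z j) (at z)" for j
  proof -
    have "isCont (\<lambda>w::nat \<Rightarrow> real. w j) z"
      by (rule continuous_on_interior[OF continuous_on_product_coordinates]) simp
    thus ?thesis by (simp add: isCont_def)
  qed
  have "((\<lambda>w. sqrt (exp (2 * K * t) * (\<Sum>j<N. (w j - z j)\<^sup>2))) \<longlongrightarrow>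
         sqrt (exp (2 * K * t) * (\<Sum>j<N. (z j - z j)\<^sup>2))) (at z)"
    by (intro tendsto_intros proj)
  hence g0: "((\<lambda>w. sqrt (exp (2 * K * t) * (\<Sum>j<N. (w j - z j)\<^sup>2))) \<longlongrightarrow> 0) (at z)" by simp
  have "((\<lambda>w. solx w t i - solx z t i) \<longlongrightarrow> 0) (at z)"
  proof (rule Lim_null_comparison[OF always_eventually g0], intro allI)
    fix w :: "nat \<Rightarrow> real"
    show "norm (solx w t i - solx z t i) \<le> sqrt (exp (2 * K * t) * (\<Sum>j<N. (w j - z j)\<^sup>2))"
      using sol_close[OF solx_is_solution solx_is_solution t i] by simp
  qed
  hence "((\<lambda>w. solx w t i) \<longlongrightarrow> solx z t i) (at z)" by (rule LIM_zero_cancel)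
  thus "isCont (\<lambda>w. solx w t i) z" by (simp add: isCont_def)
qed

lemma Phi_meas:
  assumes "0 \<le> t" "i < N"
  shows "(\<lambda>z::nat \<Rightarrow> real. solx z t i) \<in> borel_measurable (PiM UNIV (\<lambda>_. borel))"
  by (subst measurable_cong_sets[OF sets_PiM_equal_borel refl])
     (rule borel_measurable_continuous_onI[OF Phi_cont[OF assms]])

lemma idPi:
  fixes \<mu> :: "real measure"
  assumes id\<mu>: "(\<lambda>x. x) \<in> measurable \<mu> borel"
  shows "(\<lambda>x. x) \<in> measurable (PiM {..<N} (\<lambda>_. \<mu>)) (PiM UNIV (\<lambda>_. borel))"
proof -
  have "(\<lambda>\<omega> j. \<omega> j) \<in> measurable (PiM {..<N} (\<lambda>_. \<mu>)) (PiM UNIV (\<lambda>_. borel))"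
  proof (rule measurable_PiM_single')
    fix j :: nat
    show "(\<lambda>\<omega>. \<omega> j) \<in> measurable (PiM {..<N} (\<lambda>_. \<mu>)) borel"
    proof (cases "j < N")
      case True
      have "(\<lambda>\<omega>. \<omega> j) \<in> measurable (PiM {..<N} (\<lambda>_. \<mu>)) \<mu>"
        by (rule measurable_component_singleton) (use True in simp)
      thus ?thesis using id\<mu> by (rule measurable_compose)
    next
      case False
      have "(\<lambda>\<omega>::nat\<Rightarrow>real. undefined :: real) \<in> measurable (PiM {..<N} (\<lambda>_. \<mu>)) borel" by simp
      thus ?thesis
        by (rule measurable_cong[THEN iffD1, rotated]) (use False in \<open>auto simp: space_PiM PiE_def extensional_def\<close>)
    qed
  qed simp
  thus ?thesis by simp
qed

lemma solx_meas:
  fixes \<mu> :: "real measure"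
  assumes id\<mu>: "(\<lambda>x. x) \<in> measurable \<mu> borel" and "0 \<le> t" "i < N"
  shows "(\<lambda>x. solx x t i) \<in> borel_measurable (PiM {..<N} (\<lambda>_. \<mu>))"
  using measurable_comp[OF idPi[OF id\<mu>] Phi_meas[OF assms(2,3)]] by (simp add: comp_def)

lemma good_set_meas:
  fixes \<mu> :: "real measure" and c :: real
  assumes id\<mu>: "(\<lambda>x. x) \<in> measurable \<mu> borel"
  shows "{x0 \<in> space (PiM {..<N} (\<lambda>_. \<mu>)).
         \<forall>\<theta>. is_solution S I N \<omega> \<kappa> x0 \<theta> \<longrightarrow>
           (\<forall>t\<ge>0. order_param I N (\<theta> t) > c) \<and>
           (\<forall>i<N. bdd_above ((\<lambda>t. \<theta> t i) ` {0..}) \<and> bdd_below ((\<lambda>t. \<theta> t i) ` {0..}) \<and>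
              (SUP t\<in>{0..}. \<theta> t i) - (INF t\<in>{0..}. \<theta> t i) < 2 * pi)}
     \<in> sets (PiM {..<N} (\<lambda>_. \<mu>))" (is "?G \<in> sets ?M")
proof -
  define P1 where "P1 x \<longleftrightarrow> (\<forall>n::nat. \<exists>m::nat. \<forall>q\<in>{q::rat. 0 \<le> real_of_rat q \<and> real_of_rat q \<le> real n}.
      c + 1 / real (Suc m) \<le> order_param I N (solx x (real_of_rat q)))" for x
  define P2 where "P2 x i \<longleftrightarrow> (\<exists>a::rat. \<exists>b::rat. real_of_rat b - real_of_rat a < 2 * pi \<and>
        (\<forall>q\<in>{q::rat. 0 \<le> real_of_rat q}. real_of_rat a \<le> solx x (real_of_rat q) i \<and> solx x (real_of_rat q) i \<le> real_of_rat b))" for x i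
  define G1 where "G1 \<theta> \<longleftrightarrow> (\<forall>t\<ge>0. order_param I N (\<theta> t) > c)" for \<theta> :: "real \<Rightarrow> nat \<Rightarrow> real"
  define G2 where "G2 \<theta> i \<longleftrightarrow> bdd_above ((\<lambda>t. \<theta> t i) ` {0..}) \<and> bdd_below ((\<lambda>t. \<theta> t i) ` {0..}) \<and>
              (SUP t\<in>{0..}. \<theta> t i) - (INF t\<in>{0..}. \<theta> t i) < 2 * pi" for \<theta> :: "real \<Rightarrow> nat \<Rightarrow> real" and i
  define good where "good \<theta> \<longleftrightarrow> G1 \<theta> \<and> (\<forall>i<N. G2 \<theta> i)" for \<theta> :: "real \<Rightarrow> nat \<Rightarrow> real"
  have cong: "good \<theta> = good \<eta>" if eq: "\<And>t i. 0 \<le> t \<Longrightarrow> i < N \<Longrightarrow> \<theta> t i = \<eta> t i" for \<theta> \<eta>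
  proof -
    have A: "order_param I N (\<theta> t) = order_param I N (\<eta> t)" if "0 \<le> t" for t
      unfolding order_param_def by (rule arg_cong[where f="\<lambda>x. x / real N"], rule sum.cong) (use eq that in auto)
    have B: "(\<lambda>t. \<theta> t i) ` {0..} = (\<lambda>t. \<eta> t i) ` {0..}" if "i < N" for i
      by (rule image_cong) (use eq that in auto)
    have A': "G1 \<theta> = G1 \<eta>"
      unfolding G1_def using A by (metis atLeast_iff)
    have B': "G2 \<theta> i = G2 \<eta> i" if "i < N" for i
      unfolding G2_def using B[OF that] by (simp only:)
    show ?thesis unfolding good_def using A' B' by auto
  qed
  have solgood: "(\<forall>\<theta>. is_solution S I N \<omega> \<kappa> x \<theta> \<longrightarrow> good \<theta>) \<longleftrightarrow> good (solx x)" for x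
  proof
    assume "\<forall>\<theta>. is_solution S I N \<omega> \<kappa> x \<theta> \<longrightarrow> good \<theta>"
    thus "good (solx x)" using solx_is_solution[of x] by blast
  next
    assume g: "good (solx x)"
    show "\<forall>\<theta>. is_solution S I N \<omega> \<kappa> x \<theta> \<longrightarrow> good \<theta>"
    proof (intro allI impI)
      fix \<theta> assume sol: "is_solution S I N \<omega> \<kappa> x \<theta>"
      have "good \<theta> = good (solx x)"
        by (rule cong) (rule sol_unique[OF sol solx_is_solution])
      thus "good \<theta>" using g by simp
    qed
  qed
  have goodrat: "good (solx x) \<longleftrightarrow> P1 x \<and> (\<forall>i<N. P2 x i)" for x
  proof -
    have ci: "continuous_on {0..} (\<lambda>t. solx x t i)" if "i < N" for i by (rule solx_cont[OF that])
    have cR: "continuous_on {0..} (\<lambda>t. order_param I N (solx x t))"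
      unfolding order_param_def
      by (intro continuous_intros continuous_on_compose2[OF contI ci]) (use N in auto)
    have g1: "G1 (solx x) \<longleftrightarrow> P1 x"
      unfolding P1_def G1_def by (rule good1_rat[OF cR])
    have g2: "G2 (solx x) i \<longleftrightarrow> P2 x i"
      if "i < N" for i unfolding P2_def G2_def by (rule good2_rat[OF ci[OF that]])
    show ?thesis unfolding good_def using g1 g2 by auto
  qed
  have "?G = {x \<in> space ?M. \<forall>\<theta>. is_solution S I N \<omega> \<kappa> x \<theta> \<longrightarrow> good \<theta>}"
    unfolding good_def G1_def G2_def by (rule refl)
  also have "\<dots> = {x \<in> space ?M. P1 x \<and> (\<forall>i<N. P2 x i)}"
    by (simp only: solgood goodrat)
  also have "\<dots> \<in> sets ?M"
  proof -
    have L1: "Measurable.pred ?M (\<lambda>x. c' \<le> order_param I N (solx x s))" if "0 \<le> s" for s c'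
    proof -
      have "(\<lambda>x. \<Sum>j<N. I (solx x s j)) \<in> borel_measurable ?M"
      proof (rule borel_measurable_sum)
        fix j assume "j \<in> {..<N}"
        thus "(\<lambda>x. I (solx x s j)) \<in> borel_measurable ?M"
          by (intro measurable_compose[OF solx_meas[OF id\<mu> \<open>0 \<le> s\<close>] borel_measurable_continuous_onI[OF contI]]) simp
      qed
      hence "(\<lambda>x. (\<Sum>j<N. I (solx x s j)) / real N) \<in> borel_measurable ?M"
        by (rule borel_measurable_divide) simp
      hence "(\<lambda>x. order_param I N (solx x s)) \<in> borel_measurable ?M"
        by (simp add: order_param_def)
      thus ?thesis by (rule pred_const_le) simp
    qed
    have L2a: "Measurable.pred ?M (\<lambda>x. a \<le> solx x s i)" if "0 \<le> s" "i < N" for s i a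
      by (rule pred_const_le[OF solx_meas[OF id\<mu> that]]) simp
    have L2b: "Measurable.pred ?M (\<lambda>x. solx x s i \<le> b)" if "0 \<le> s" "i < N" for s i b
      by (rule pred_le_const[OF solx_meas[OF id\<mu> that]]) simp
    have Lc: "Measurable.pred ?M (\<lambda>x. K)" for K by (cases K) (auto simp: pred_def)
    have "Measurable.pred ?M (\<lambda>x. P1 x \<and> (\<forall>i<N. P2 x i))"
      unfolding P1_def P2_def
      apply (intro pred_intros_logic(3) pred_intros_countable pred_intros_countable_bounded(3)
          pred_intros_imp' pred_intros_conj1')
      using L1 L2a L2b Lc by auto
    thus ?thesis by (rule predE)
  qed
  finally show ?thesis .
qed

end

lemma periodic_bounded:
  fixes f :: "real \<Rightarrow> real"
  assumes cont: "continuous_on UNIV f" and per: "\<forall>x. f (x + 2 * pi) = f x"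
  obtains M where "\<And>x. \<bar>f x\<bar> \<le> M"
proof -
  have "compact (f ` {-pi..pi})"
    by (rule compact_continuous_image[OF continuous_on_subset[OF cont] compact_Icc]) simp
  hence "bounded (f ` {-pi..pi})" by (rule compact_imp_bounded)
  then obtain M where M: "\<And>y. y \<in> f ` {-pi..pi} \<Longrightarrow> \<bar>y\<bar> \<le> M" unfolding bounded_real by blast
  have "\<bar>f x\<bar> \<le> M" for x
  proof -
    obtain y where "y \<in> {-pi..pi}" "f x = f y" using periodic_eq_reduced[OF per] by blast
    thus ?thesis using M by auto
  qed
  thus ?thesis using that by blast
qed

theorem theorem2p12:
  fixes S I :: "real \<Rightarrow> real" and \<alpha>0 p q c1 c2 c3 \<kappa> :: real
    and N :: nat and \<omega> :: "nat \<Rightarrow> real" and \<mu> :: "real measure"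
  assumes S_per: "\<forall>x. S (x + 2 * pi) = S x"
    and I_per: "\<forall>x. I (x + 2 * pi) = I x"
    and S_lip: "\<exists>L. L-lipschitz_on UNIV S"
    and I_lip: "\<exists>L. L-lipschitz_on UNIV I"
    and \<alpha>0: "0 < \<alpha>0" "\<alpha>0 < pi"
    and pq: "p \<ge> 1" "q \<ge> 1"
    and cs: "c1 > 0" "c2 > 0" "0 < c3" "c3 \<le> 1"
    and S_right: "\<forall>\<theta>\<in>{\<alpha>0..pi}. S \<theta> \<le> - c1 * (pi - \<theta>) powr p"
    and S_left: "\<forall>\<theta>\<in>{-pi..-\<alpha>0}. S \<theta> \<ge> c1 * (\<theta> + pi) powr p"
    and I_bounds: "\<forall>\<theta>\<in>{-pi..pi}. 0 \<le> I \<theta> \<and> I \<theta> \<le> c2 * (pi - \<bar>\<theta>\<bar>) powr q"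
    and I_min: "\<forall>\<theta>\<in>{-pi..pi}. \<forall>\<phi>. \<bar>\<phi>\<bar> \<le> max \<bar>\<theta>\<bar> \<alpha>0 \<longrightarrow> I \<phi> \<ge> c3 * I \<theta>"
    and N: "N \<ge> 1"
    and \<mu>_prob: "prob_space \<mu>"
    and \<mu>_space: "space \<mu> = {-pi..pi}"
    and \<mu>_sets: "sets \<mu> = sets (restrict_space borel {-pi..pi})"
    and Rstar_pos: "(\<integral>\<theta>. I \<theta> \<partial>\<mu>) > 0"
    and \<kappa>_big: "\<kappa> > max
        (4 * (4 * c2) powr (p / q) / (c1 * c3) * (Max ((\<lambda>i. \<bar>\<omega> i\<bar>) ` {..<N}))
           / (\<integral>\<theta>. I \<theta> \<partial>\<mu>) powr (1 + p / q))
        (4 / (c1 * c3 * (pi - \<alpha>0) powr p) * (Max ((\<lambda>i. \<bar>\<omega> i\<bar>) ` {..<N}))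
           / (\<integral>\<theta>. I \<theta> \<partial>\<mu>))"
  shows "measure (PiM {..<N} (\<lambda>_. \<mu>))
      {x0 \<in> space (PiM {..<N} (\<lambda>_. \<mu>)).
         \<forall>\<theta>. is_solution S I N \<omega> \<kappa> x0 \<theta> \<longrightarrow>
           (\<forall>t\<ge>0. order_param I N (\<theta> t) > c3 * (\<integral>\<theta>. I \<theta> \<partial>\<mu>) / 4) \<and>
           (\<forall>i<N. bdd_above ((\<lambda>t. \<theta> t i) ` {0..}) \<and> bdd_below ((\<lambda>t. \<theta> t i) ` {0..}) \<and>
              (SUP t\<in>{0..}. \<theta> t i) - (INF t\<in>{0..}. \<theta> t i) < 2 * pi)}
    \<ge> 1 - exp (- ((\<integral>\<theta>. I \<theta> \<partial>\<mu>)\<^sup>2 * real N / (2 * (sup_norm I)\<^sup>2)))"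
proof -
  define Rs where "Rs = (\<integral>\<theta>. I \<theta> \<partial>\<mu>)"
  have Rs: "Rs > 0" using Rstar_pos by (simp add: Rs_def)
  obtain LS where LS: "LS-lipschitz_on UNIV S" using S_lip by blast
  obtain LI where LI: "LI-lipschitz_on UNIV I" using I_lip by blast
  have contS: "continuous_on UNIV S" by (rule lipschitz_on_continuous_on[OF LS])
  have contI: "continuous_on UNIV I" by (rule lipschitz_on_continuous_on[OF LI])
  have lS: "\<bar>S x - S y\<bar> \<le> LS * \<bar>x - y\<bar>" for x y
    using lipschitz_onD[OF LS, of x y] by (simp add: dist_real_def)
  have lI: "\<bar>I x - I y\<bar> \<le> LI * \<bar>x - y\<bar>" for x y
    using lipschitz_onD[OF LI, of x y] by (simp add: dist_real_def)
  obtain MS where bS: "\<And>x. \<bar>S x\<bar> \<le> MS" using periodic_bounded[OF contS S_per] by blast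
  obtain MI where bI: "\<And>x. \<bar>I x\<bar> \<le> MI" using periodic_bounded[OF contI I_per] by blast
  interpret O: kura_ode S I N \<omega> \<kappa> MS MI LS LI
    by unfold_locales (use contS contI bS bI lS lI N in auto)
  interpret D: kura_det S I \<alpha>0 p q c1 c2 c3 \<kappa> Rs N \<omega>
    by unfold_locales (use S_per I_per contS contI \<alpha>0 pq cs S_right S_left I_bounds I_min N Rs \<kappa>_big in
      \<open>simp_all add: Rs_def\<close>)
  let ?M = "PiM {..<N} (\<lambda>_. \<mu>)"
  have id\<mu>: "(\<lambda>x. x) \<in> measurable \<mu> borel"
  proof -
    have "(\<lambda>x. x) \<in> measurable (restrict_space borel {-pi..pi}) borel"
      by (rule measurable_restrict_space1) simp
    thus ?thesis by (subst measurable_cong_sets[OF \<mu>_sets refl])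
  qed
  have I\<mu>: "I \<in> borel_measurable \<mu>"
    using measurable_compose[OF id\<mu> borel_measurable_continuous_onI[OF contI]] by simp
  define G where "G = {x0 \<in> space ?M.
         \<forall>\<theta>. is_solution S I N \<omega> \<kappa> x0 \<theta> \<longrightarrow>
           (\<forall>t\<ge>0. order_param I N (\<theta> t) > c3 * Rs / 4) \<and>
           (\<forall>i<N. bdd_above ((\<lambda>t. \<theta> t i) ` {0..}) \<and> bdd_below ((\<lambda>t. \<theta> t i) ` {0..}) \<and>
              (SUP t\<in>{0..}. \<theta> t i) - (INF t\<in>{0..}. \<theta> t i) < 2 * pi)}"
  have Gm: "G \<in> sets ?M" unfolding G_def by (rule O.good_set_meas[OF id\<mu>])
  have Mprob: "prob_space ?M" by (rule prob_space_PiM) (use \<mu>_prob in auto)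
  interpret P: prob_space ?M by (rule Mprob)
  define B where "B = {x \<in> space ?M. (\<Sum>i\<in>{..<N}. I (x i)) \<le> real N * Rs - real N * Rs / 2}"
  have Npos: "real N > 0" using N by simp
  have AG: "space ?M - B \<subseteq> G"
  proof
    fix x assume x: "x \<in> space ?M - B"
    have xr: "\<forall>i<N. x i \<in> {-pi..pi}" using x \<mu>_space by (auto simp: space_PiM)
    have "\<not> (\<Sum>i\<in>{..<N}. I (x i)) \<le> real N * Rs - real N * Rs / 2" using x by (simp add: B_def)
    hence "(\<Sum>i<N. I (x i)) > real N * (Rs / 2)" by linarith
    hence "order_param I N x > Rs / 2" using Npos by (simp add: order_param_def field_simps)
    thus "x \<in> G" using x D.det_good[OF xr] by (auto simp: G_def)
  qed
  have sumI: "(\<lambda>x. \<Sum>i\<in>{..<N}. I (x i)) \<in> borel_measurable ?M"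
  proof (rule borel_measurable_sum)
    fix i assume "i \<in> {..<N}"
    show "(\<lambda>x. I (x i)) \<in> borel_measurable ?M"
    proof -
      have "(\<lambda>x. x i) \<in> measurable ?M \<mu>" by (rule measurable_component_singleton) (use \<open>i \<in> {..<N}\<close> in simp)
      thus ?thesis using I\<mu> by (rule measurable_compose)
    qed
  qed
  have Bm: "B \<in> sets ?M" unfolding B_def using sumI by measurable
  have bddI: "bdd_above (range (\<lambda>\<theta>. \<bar>I \<theta>\<bar>))" using bI by (intro bdd_aboveI2) auto
  have supI: "\<bar>I y\<bar> \<le> sup_norm I" for y unfolding sup_norm_def by (rule cSUP_upper[OF _ bddI]) simp
  have sup_pos: "sup_norm I > 0"
  proof (rule ccontr)
    assume "\<not> sup_norm I > 0"
    hence "I y = 0" for y using supI[of y] by simp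
    hence "Rs = 0" by (simp add: Rs_def)
    thus False using Rs by simp
  qed
  have comp: "distr ?M \<mu> (\<lambda>x. x i) = \<mu>" if "i < N" for i
    by (rule distr_PiM_component) (use \<mu>_prob that in auto)
  have ind0: "P.indep_vars (\<lambda>_. \<mu>) (\<lambda>i x. x i) {..<N}"
  proof (subst P.indep_vars_iff_distr_eq_PiM')
    have "0 \<in> {..<N}" using N by simp
    thus "{..<N} \<noteq> {}" by blast
    show "(\<lambda>x. x i) \<in> measurable ?M \<mu>" if "i \<in> {..<N}" for i
      by (rule measurable_component_singleton) (use that in simp)
    have "distr ?M ?M (\<lambda>x. \<lambda>i\<in>{..<N}. x i) = distr ?M ?M (\<lambda>x. x)"
      by (rule distr_cong) (auto simp: space_PiM PiE_def extensional_restrict)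
    also have "\<dots> = ?M" by (rule distr_id)
    also have "\<dots> = PiM {..<N} (\<lambda>i. distr ?M \<mu> (\<lambda>x. x i))"
      by (rule PiM_cong) (auto simp: comp)
    finally show "distr ?M ?M (\<lambda>x. \<lambda>i\<in>{..<N}. x i) = PiM {..<N} (\<lambda>i. distr ?M \<mu> (\<lambda>x. x i))" .
  qed
  have ind: "P.indep_vars (\<lambda>_. borel) (\<lambda>i x. I (x i)) {..<N}"
    by (rule P.indep_vars_compose2[OF ind0]) (rule I\<mu>)
  have expI: "P.expectation (\<lambda>x. I (x i)) = Rs" if "i < N" for i
  proof -
    have "P.expectation (\<lambda>x. I (x i)) = integral\<^sup>L (distr ?M \<mu> (\<lambda>x. x i)) I"
      by (rule integral_distr[symmetric]) (use that I\<mu> in \<open>auto intro: measurable_component_singleton\<close>)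
    also have "\<dots> = Rs" using comp[OF that] by (simp add: Rs_def)
    finally show ?thesis .
  qed
  interpret H: Hoeffding_ineq ?M "{..<N}" "\<lambda>i x. I (x i)" "\<lambda>_. 0" "\<lambda>_. sup_norm I" "real N * Rs"
  proof unfold_locales
    show "finite {..<N}" by simp
    show "P.indep_vars (\<lambda>_. borel) (\<lambda>i x. I (x i)) {..<N}" by (rule ind)
    fix i assume i: "i \<in> {..<N}"
    show "AE x in ?M. I (x i) \<in> {0..sup_norm I}"
    proof (rule AE_I2)
      fix x assume "x \<in> space ?M"
      show "I (x i) \<in> {0..sup_norm I}" using D.I_nonneg[of "x i"] supI[of "x i"] by auto
    qed
  qed (simp add: expI)
  have hb: "P.prob B \<le> exp (-2 * (real N * Rs / 2)\<^sup>2 / (\<Sum>i\<in>{..<N}. (sup_norm I - 0)\<^sup>2))"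
    unfolding B_def
    by (rule H.Hoeffding_ineq_le) (use Rs sup_pos N in \<open>auto intro!: sum_pos\<close>)
  have "-2 * (real N * Rs / 2)\<^sup>2 / (\<Sum>i\<in>{..<N}. (sup_norm I - 0)\<^sup>2) = - (Rs\<^sup>2 * real N / (2 * (sup_norm I)\<^sup>2))"
    using Npos sup_pos by (simp add: power2_eq_square field_simps)
  hence hb': "P.prob B \<le> exp (- (Rs\<^sup>2 * real N / (2 * (sup_norm I)\<^sup>2)))" using hb by simp
  have "P.prob G \<ge> P.prob (space ?M - B)"
    by (rule P.finite_measure_mono[OF AG Gm])
  moreover have "P.prob (space ?M - B) = 1 - P.prob B" by (rule P.prob_compl[OF Bm])
  ultimately have "P.prob G \<ge> 1 - exp (- (Rs\<^sup>2 * real N / (2 * (sup_norm I)\<^sup>2)))" using hb' by linarith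
  thus ?thesis unfolding G_def Rs_def .
qed

end
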